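(* Assume conditions (1)–(4) of the context and $n\cdot\mathrm{SNR}^q=\tilde\Omega(1)$. Then on the event $\mathcal E_{\mathrm{prelim}}$ there exists $T_1=\tilde O(\eta^{-1}m\sigma_0^{2-q}\|\boldsymbol\mu\|_2^{-q})$ such that - $\max_r\gamma_{j,r}^{(T_1)}=\Omega(1)$ for $j\in\{\pm1\}$; - $|\rho_{j,r,i}^{(t)}|=O(\sigma_0\sigma_p\sqrt d)$ for all $j\in\{\pm1\}$, $r\in[m]$, $i\in[n]$ and $0\le t\le T_1$.
   Context: Data: nonzero $\boldsymbol\mu\in\mathbb R^d$, $\sigma_p>0$; sample $(\mathbf x,y)$, $\mathbf x=[\mathbf x_1^\top,\mathbf x_2^\top]^\top$: $y$ Rademacher, $\boldsymbol\xi\sim N(\mathbf 0,\sigma_p^2(\mathbf I-\boldsymbol\mu\boldsymbol\mu^\top\|\boldsymbol\mu\|_2^{-2}))$, one patch $y\boldsymbol\mu$, the other $\boldsymbol\xi$. $\mathrm{SNR}=\|\boldsymbol\mu\|_2/(\sigma_p\sqrt d)$. Training set $\{(\mathbf x_i,y_i)\}_{i=1}^n$ i.i.d., noise patches $\boldsymbol\xi_i$. Network: $\sigma(z)=(\max\{0,z\})^q$, $q>2$; $F_j(\mathbf W_j,\mathbf x)=\frac1m\sum_{r=1}^m[\sigma(\langle\mathbf w_{j,r},\mathbf x_1\rangle)+\sigma(\langle\mathbf w_{j,r},\mathbf x_2\rangle)]$, $f=F_{+1}-F_{-1}$; $\ell(z)=\log(1+e^{-z})$, $L_S(\mathbf W)=\frac1n\sum_i\ell(y_if(\mathbf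 W,\mathbf x_i))$. Gradient descent with step $\eta$ from i.i.d. $N(0,\sigma_0^2)$ initialization. Signal-noise decomposition: unique $\gamma_{j,r}^{(t)}\ge0$, $\rho_{j,r,i}^{(t)}$ with $\mathbf w_{j,r}^{(t)}=\mathbf w_{j,r}^{(0)}+j\gamma_{j,r}^{(t)}\|\boldsymbol\mu\|_2^{-2}\boldsymbol\mu+\sum_i\rho_{j,r,i}^{(t)}\|\boldsymbol\xi_i\|_2^{-2}\boldsymbol\xi_i$. Conditions: (1) $d=\tilde\Omega(m^{2\vee[4/(q-2)]}n^{4\vee[(2q-2)/(q-2)]})$; (2) $n,m=\Omega(\mathrm{polylog}(d))$; (3) $\eta\le\tilde O(\min\{\|\boldsymbol\mu\|_2^{-2},\sigma_p^{-2}d^{-1}\})$; (4) $\tilde O(nd^{-1/2})\min\{(\sigma_p\sqrt d)^{-1},\|\boldsymbol\mu\|_2^{-1}\}\le\sigma_0\le\tilde O(m^{-2/(q-2)}n^{-[1/(q-2)]\vee1})\min\{(\sigma_p\sqrt d)^{-1},\|\boldsymbol\mu\|_2^{-1}\}$. Standing assumption: $\mathcal E_{\mathrm{prelim}}$ (for a confidence parameter $\delta\in(0,1)$) is the high-probability event on which: both label classes have at least $n/4$ samples; $\sigma_p^2d/2\le\|\boldsymbol\xi_i\|_2^2\le3\sigma_p^2d/2$, $|\langle\boldsymbol\xi_i,\boldsymbol\xi_{i'}\rangle|\le2\sigma_p^2\sqrt{d\log(4n^2/\delta)}$ ($i\ne i'$); $|\langle\mathbf w_{j,r}^{(0)},\boldsymbol\mu\rangle|\le\sqrt{2\log(8m/\delta)}\sigma_0\|\boldsymbol\mu\|_2$,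 $|\langle\mathbf w_{j,r}^{(0)},\boldsymbol\xi_i\rangle|\le2\sqrt{\log(8mn/\delta)}\sigma_0\sigma_p\sqrt d$, $\max_rj\langle\mathbf w_{j,r}^{(0)},\boldsymbol\mu\rangle\ge\sigma_0\|\boldsymbol\mu\|_2/2$, $\max_rj\langle\mathbf w_{j,r}^{(0)},\boldsymbol\xi_i\rangle\ge\sigma_0\sigma_p\sqrt d/4$. *)

theory Defs
  imports Complex_Main
begin

text \<open>Vectors in R^d are represented as functions nat => real; only the
  coordinates k < d matter.  Explicit dimension is needed because d is
  quantified after the hidden constants of the asymptotic notation.\<close>

definition vinner :: "nat \<Rightarrow> (nat \<Rightarrow> real) \<Rightarrow> (nat \<Rightarrow> real) \<Rightarrow> real" where
  "vinner d u v = (\<Sum>k<d. u k * v k)"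

definition vnorm :: "nat \<Rightarrow> (nat \<Rightarrow> real) \<Rightarrow> real" where
  "vnorm d u = sqrt (vinner d u u)"

definition act :: "real \<Rightarrow> real \<Rightarrow> real" where
  "act q z = (max 0 z) powr q"

definition act_deriv :: "real \<Rightarrow> real \<Rightarrow> real" where
  "act_deriv q z = q * (max 0 z) powr (q - 1)"

definition logloss :: "real \<Rightarrow> real" where
  "logloss z = ln (1 + exp (- z))"

definition logloss_deriv :: "real \<Rightarrow> real" where
  "logloss_deriv z = - 1 / (1 + exp z)"

text \<open>Weights W j r (j in {1,-1}, r < m) are vectors.  F_j evaluated on the
  i-th training sample, whose two patches are y_i mu and xi_i (the order of
  the patches does not affect F_j).\<close>
definition netF ::
  "real \<Rightarrow> nat \<Rightarrow> nat \<Rightarrow> (int \<Rightarrow> nat \<Rightarrow> nat \<Rightarrow> real) \<Rightarrow> int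
    \<Rightarrow> (nat \<Rightarrow> real) \<Rightarrow> int \<Rightarrow> (nat \<Rightarrow> real) \<Rightarrow> real" where
  "netF q d m W j mu yi xii =
     (1 / real m) * (\<Sum>r<m. act q (vinner d (W j r) (\<lambda>k. of_int yi * mu k))
                         + act q (vinner d (W j r) xii))"

definition netf ::
  "real \<Rightarrow> nat \<Rightarrow> nat \<Rightarrow> (int \<Rightarrow> nat \<Rightarrow> nat \<Rightarrow> real)
    \<Rightarrow> (nat \<Rightarrow> real) \<Rightarrow> int \<Rightarrow> (nat \<Rightarrow> real) \<Rightarrow> real" where
  "netf q d m W mu yi xii = netF q d m W 1 mu yi xii - netF q d m W (-1) mu yi xii"

definition risk ::
  "real \<Rightarrow> nat \<Rightarrow> nat \<Rightarrow> nat \<Rightarrow> (nat \<Rightarrow> real) \<Rightarrow> (nat \<Rightarrow> int)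
    \<Rightarrow> (nat \<Rightarrow> nat \<Rightarrow> real) \<Rightarrow> (int \<Rightarrow> nat \<Rightarrow> nat \<Rightarrow> real) \<Rightarrow> real" where
  "risk q d m n mu y xi W =
     (1 / real n) * (\<Sum>i<n. logloss (of_int (y i) * netf q d m W mu (y i) (xi i)))"

text \<open>Gradient of L_S with respect to w_{j,r}, k-th coordinate (computed by
  the chain rule; sigma is continuously differentiable since q > 2).\<close>
definition risk_grad ::
  "real \<Rightarrow> nat \<Rightarrow> nat \<Rightarrow> nat \<Rightarrow> (nat \<Rightarrow> real) \<Rightarrow> (nat \<Rightarrow> int)
    \<Rightarrow> (nat \<Rightarrow> nat \<Rightarrow> real) \<Rightarrow> (int \<Rightarrow> nat \<Rightarrow> nat \<Rightarrow> real)
    \<Rightarrow> int \<Rightarrow> nat \<Rightarrow> nat \<Rightarrow> real" where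
  "risk_grad q d m n mu y xi W j r k =
     (1 / real n) * (\<Sum>i<n. logloss_deriv (of_int (y i) * netf q d m W mu (y i) (xi i))
        * of_int (y i) * of_int j / real m
        * (act_deriv q (vinner d (W j r) (\<lambda>k'. of_int (y i) * mu k')) * (of_int (y i) * mu k)
           + act_deriv q (vinner d (W j r) (xi i)) * xi i k))"

fun gd ::
  "real \<Rightarrow> nat \<Rightarrow> nat \<Rightarrow> nat \<Rightarrow> (nat \<Rightarrow> real) \<Rightarrow> (nat \<Rightarrow> int)
    \<Rightarrow> (nat \<Rightarrow> nat \<Rightarrow> real) \<Rightarrow> real \<Rightarrow> (int \<Rightarrow> nat \<Rightarrow> nat \<Rightarrow> real)
    \<Rightarrow> nat \<Rightarrow> int \<Rightarrow> nat \<Rightarrow> nat \<Rightarrow> real" where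
  "gd q d m n mu y xi eta W0 0 = W0"
| "gd q d m n mu y xi eta W0 (Suc t) =
     (\<lambda>j r k. gd q d m n mu y xi eta W0 t j r k
              - eta * risk_grad q d m n mu y xi (gd q d m n mu y xi eta W0 t) j r k)"

text \<open>The event E_prelim (deterministic conditions on the sample and the
  initialization W0).\<close>
definition E_prelim ::
  "nat \<Rightarrow> nat \<Rightarrow> nat \<Rightarrow> real \<Rightarrow> real \<Rightarrow> real \<Rightarrow> (nat \<Rightarrow> real) \<Rightarrow> (nat \<Rightarrow> int)
    \<Rightarrow> (nat \<Rightarrow> nat \<Rightarrow> real) \<Rightarrow> (int \<Rightarrow> nat \<Rightarrow> nat \<Rightarrow> real) \<Rightarrow> bool" where
  "E_prelim d m n \<delta> \<sigma>p \<sigma>0 mu y xi W0 \<longleftrightarrow>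
     real (card {i. i < n \<and> y i = 1}) \<ge> real n / 4 \<and>
     real (card {i. i < n \<and> y i = -1}) \<ge> real n / 4 \<and>
     (\<forall>i<n. \<sigma>p\<^sup>2 * real d / 2 \<le> (vnorm d (xi i))\<^sup>2 \<and> (vnorm d (xi i))\<^sup>2 \<le> 3 * \<sigma>p\<^sup>2 * real d / 2) \<and>
     (\<forall>i<n. \<forall>i'<n. i \<noteq> i' \<longrightarrow>
        \<bar>vinner d (xi i) (xi i')\<bar> \<le> 2 * \<sigma>p\<^sup>2 * sqrt (real d * ln (4 * (real n)\<^sup>2 / \<delta>))) \<and>
     (\<forall>j\<in>{1,-1}. \<forall>r<m.
        \<bar>vinner d (W0 j r) mu\<bar> \<le> sqrt (2 * ln (8 * real m / \<delta>)) * \<sigma>0 * vnorm d mu) \<and>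
     (\<forall>j\<in>{1,-1}. \<forall>r<m. \<forall>i<n.
        \<bar>vinner d (W0 j r) (xi i)\<bar> \<le> 2 * sqrt (ln (8 * real m * real n / \<delta>)) * \<sigma>0 * \<sigma>p * sqrt (real d)) \<and>
     (\<forall>j\<in>{1,-1}. \<exists>r<m. of_int j * vinner d (W0 j r) mu \<ge> \<sigma>0 * vnorm d mu / 2) \<and>
     (\<forall>j\<in>{1,-1}. \<forall>i<n. \<exists>r<m. of_int j * vinner d (W0 j r) (xi i) \<ge> \<sigma>0 * \<sigma>p * sqrt (real d) / 4)"

end

theory Submission
  imports Defs
begin



lemma vinner_sym: "vinner d u v = vinner d v u"
  unfolding vinner_def by (simp add: mult.commute)

lemma grad_inner:
  "vinner d (\<lambda>k. risk_grad q d m n mu y xi W j r k) u =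
   (1 / real n) * (\<Sum>i<n. logloss_deriv (of_int (y i) * netf q d m W mu (y i) (xi i))
        * of_int (y i) * of_int j / real m
        * (act_deriv q (vinner d (W j r) (\<lambda>k'. of_int (y i) * mu k')) * of_int (y i) * vinner d mu u
           + act_deriv q (vinner d (W j r) (xi i)) * vinner d (xi i) u))"
  unfolding vinner_def risk_grad_def
  by (simp add: sum_distrib_left sum_distrib_right sum.distrib algebra_simps sum.swap[where A="{..<d}"] sum_divide_distrib)

lemma step_inner:
  "vinner d (gd q d m n mu y xi eta W0 (Suc t) j r) u =
   vinner d (gd q d m n mu y xi eta W0 t j r) u
   - eta * vinner d (\<lambda>k. risk_grad q d m n mu y xi (gd q d m n mu y xi eta W0 t) j r k) u"
  unfolding vinner_def by (simp add: sum_subtractf sum_distrib_left algebra_simps)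




lemma act_nonneg: "act q z \<ge> 0" unfolding act_def by simp
lemma act_deriv_nonneg: "q \<ge> 0 \<Longrightarrow> act_deriv q z \<ge> 0" unfolding act_deriv_def by simp

lemma act_deriv_le: "q \<ge> 1 \<Longrightarrow> z \<le> b \<Longrightarrow> 0 \<le> b \<Longrightarrow> act_deriv q z \<le> q * b powr (q - 1)"
  unfolding act_deriv_def
  by (intro mult_left_mono powr_mono2) auto

lemma act_le_half: "q \<ge> 1 \<Longrightarrow> z \<le> 1/2 \<Longrightarrow> act q z \<le> 1/2"
proof -
  assume q: "q \<ge> 1" and z: "z \<le> 1/2"
  have "act q z \<le> (1/2) powr q" unfolding act_def by (intro powr_mono2) (use q z in auto)
  also have "\<dots> \<le> (1/2) powr 1" by (rule powr_mono') (use q in auto)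
  finally show ?thesis by simp
qed

lemma lp_pos: "- logloss_deriv z > 0" unfolding logloss_deriv_def by (simp add: add_pos_pos)
lemma lp_le1: "- logloss_deriv z \<le> 1" unfolding logloss_deriv_def
  by (simp add: divide_le_eq add_pos_pos)
lemma lp_ge: "z \<le> 1 \<Longrightarrow> - logloss_deriv z \<ge> 1/4"
proof -
  assume "z \<le> 1"
  then have "exp z \<le> exp 1" by simp
  also have "exp (1::real) \<le> 3" using exp_le by simp
  finally have "1 + exp z \<le> 4" by simp
  then show ?thesis unfolding logloss_deriv_def
    by (simp add: le_divide_eq add_pos_pos)
qed




locale gdsetup =
  fixes q :: real and d m n :: nat and mu :: "nat \<Rightarrow> real" and y :: "nat \<Rightarrow> int"
    and xi :: "nat \<Rightarrow> nat \<Rightarrow> real" and eta :: real and W0 :: "int \<Rightarrow> nat \<Rightarrow> nat \<Rightarrow> real"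
  assumes q2: "q > 2" and m1: "m \<ge> 1" and n1: "n \<ge> 1" and eta0: "eta > 0"
    and ylab: "\<forall>i<n. y i \<in> {1, -1}"
    and orth: "\<forall>i<n. vinner d (xi i) mu = 0"
    and Mpos: "vinner d mu mu > 0"
begin

abbreviation "W t \<equiv> gd q d m n mu y xi eta W0 t"
definition "lp t i = - logloss_deriv (of_int (y i) * netf q d m (W t) mu (y i) (xi i))"
abbreviation "M \<equiv> vinner d mu mu"

lemma y2: "i < n \<Longrightarrow> of_int (y i) * (of_int (y i) :: real) = 1"
  using ylab by auto

lemma mu_step:
  "vinner d (W (Suc t) j r) mu = vinner d (W t j r) mu
     + of_int j * eta * M / (real n * real m) *
       (\<Sum>i<n. lp t i * act_deriv q (vinner d (W t j r) (\<lambda>k. of_int (y i) * mu k)))"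
proof -
  have "vinner d (\<lambda>k. risk_grad q d m n mu y xi (W t) j r k) mu =
    (1 / real n) * (\<Sum>i<n. logloss_deriv (of_int (y i) * netf q d m (W t) mu (y i) (xi i))
        * of_int (y i) * of_int j / real m
        * (act_deriv q (vinner d (W t j r) (\<lambda>k'. of_int (y i) * mu k')) * of_int (y i) * M
           + act_deriv q (vinner d (W t j r) (xi i)) * vinner d (xi i) mu))"
    by (rule grad_inner)
  also have "\<dots> = (1 / real n) * (\<Sum>i<n. - (of_int j / real m * M) * (lp t i *
        act_deriv q (vinner d (W t j r) (\<lambda>k'. of_int (y i) * mu k'))))"
  proof -
    have "\<And>i. i \<in> {..<n} \<Longrightarrow> logloss_deriv (of_int (y i) * netf q d m (W t) mu (y i) (xi i))
        * of_int (y i) * of_int j / real m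
        * (act_deriv q (vinner d (W t j r) (\<lambda>k'. of_int (y i) * mu k')) * of_int (y i) * M
           + act_deriv q (vinner d (W t j r) (xi i)) * vinner d (xi i) mu)
        = - (of_int j / real m * M) * (lp t i *
        act_deriv q (vinner d (W t j r) (\<lambda>k'. of_int (y i) * mu k')))"
    proof -
      fix i assume i: "i \<in> {..<n}"
      then have o: "vinner d (xi i) mu = 0" using orth by auto
      have yy: "of_int (y i) * (of_int (y i) :: real) = 1" using y2 i by auto
      show "?thesis i" unfolding lp_def o
        by (simp add: algebra_simps) (metis (no_types, opaque_lifting) mult.assoc mult.left_commute mult_1 yy)
    qed
    then show ?thesis by (intro arg_cong[where f="\<lambda>x. 1 / real n * x"] sum.cong) auto
  qed
  also have "\<dots> = - (of_int j / real m * M) / real n * (\<Sum>i<n. lp t i *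
        act_deriv q (vinner d (W t j r) (\<lambda>k'. of_int (y i) * mu k')))"
    by (simp add: sum_distrib_left mult.commute)
  finally show ?thesis unfolding step_inner
    by (simp add: algebra_simps)
qed

lemma xi_step:
  assumes i0: "i0 < n"
  shows "vinner d (W (Suc t) j r) (xi i0) = vinner d (W t j r) (xi i0)
     + eta / (real n * real m) *
       (\<Sum>i<n. lp t i * of_int (y i) * of_int j * act_deriv q (vinner d (W t j r) (xi i)) * vinner d (xi i) (xi i0))"
proof -
  have o0: "vinner d mu (xi i0) = 0" using orth i0 vinner_sym by metis
  have "vinner d (\<lambda>k. risk_grad q d m n mu y xi (W t) j r k) (xi i0) =
    (1 / real n) * (\<Sum>i<n. logloss_deriv (of_int (y i) * netf q d m (W t) mu (y i) (xi i))
        * of_int (y i) * of_int j / real m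
        * (act_deriv q (vinner d (W t j r) (\<lambda>k'. of_int (y i) * mu k')) * of_int (y i) * vinner d mu (xi i0)
           + act_deriv q (vinner d (W t j r) (xi i)) * vinner d (xi i) (xi i0)))"
    by (rule grad_inner)
  also have "\<dots> = - (1 / (real n * real m)) * (\<Sum>i<n. lp t i * of_int (y i) * of_int j * act_deriv q (vinner d (W t j r) (xi i)) * vinner d (xi i) (xi i0))"
    unfolding o0 lp_def by (simp add: sum_distrib_left sum_divide_distrib algebra_simps)
  finally show ?thesis unfolding step_inner by (simp add: algebra_simps)
qed

definition "g t j r = of_int j * (vinner d (W t j r) mu - vinner d (W0 j r) mu)"

lemma lp_nonneg: "lp t i \<ge> 0" unfolding lp_def using lp_pos less_imp_le by blast

lemma g_step:
  assumes j: "j \<in> {1, -1}"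
  shows "g (Suc t) j r = g t j r + eta * M / (real n * real m) *
       (\<Sum>i<n. lp t i * act_deriv q (vinner d (W t j r) (\<lambda>k. of_int (y i) * mu k)))"
proof -
  have jj: "of_int j * (of_int j :: real) = 1" using j by auto
  show ?thesis unfolding g_def mu_step
    by (simp add: algebra_simps) (metis (no_types, lifting) jj mult.assoc mult_1)
qed

lemma g0: "g 0 j r = 0" unfolding g_def by simp

lemma g_mono_step:
  assumes j: "j \<in> {1, -1}"
  shows "g t j r \<le> g (Suc t) j r"
proof -
  have "0 \<le> eta * M / (real n * real m) *
       (\<Sum>i<n. lp t i * act_deriv q (vinner d (W t j r) (\<lambda>k. of_int (y i) * mu k)))"
    using eta0 Mpos q2 by (intro mult_nonneg_nonneg divide_nonneg_nonneg sum_nonneg lp_nonneg act_deriv_nonneg) auto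
  then show ?thesis using g_step[OF j] by simp
qed

lemma g_mono:
  assumes j: "j \<in> {1, -1}" and "t \<le> t'"
  shows "g t j r \<le> g t' j r"
  using assms(2)
proof (induction t')
  case 0 then show ?case by simp
next
  case (Suc t')
  then show ?case using g_mono_step[OF j, of t' r] by (cases "t = Suc t'") auto
qed

end



lemma vinner_scale2: "vinner d u (\<lambda>k. c * v k) = c * vinner d u v"
  unfolding vinner_def by (simp add: sum_distrib_left algebra_simps)

locale gdmain = gdsetup +
  fixes D P P' s a \<tau> :: real and N :: nat
  assumes D0: "D > 0"
    and xinorm: "\<forall>i<n. D/2 \<le> vinner d (xi i) (xi i) \<and> vinner d (xi i) (xi i) \<le> 3*D/2"
    and cross: "\<forall>i<n. \<forall>i'<n. i \<noteq> i' \<longrightarrow> \<bar>vinner d (xi i) (xi i')\<bar> \<le> D/(4*real n)"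
    and s0: "s > 0" and a0: "a > 0" and P0: "P \<ge> 0" and P'0: "P' \<ge> 0"
    and W0xi: "\<forall>j\<in>{1,-1}. \<forall>r<m. \<forall>i<n. \<bar>vinner d (W0 j r) (xi i)\<bar> \<le> P * s"
    and W0mu: "\<forall>j\<in>{1,-1}. \<forall>r<m. \<bar>vinner d (W0 j r) mu\<bar> \<le> P' * a"
    and W0good: "\<forall>j\<in>{1,-1}. \<exists>r<m. of_int j * vinner d (W0 j r) mu \<ge> a/2"
    and cardj: "\<forall>j\<in>{1,-1}. real (card {i. i<n \<and> y i = j}) \<ge> real n / 4"
    and Fb1: "P' * a + \<tau> \<le> 1/2" and Fb2: "(P+1) * s \<le> 1/2"
    and A2: "real N * (eta / (real n * real m) * q * ((P+1)*s) powr (q-1) * (2*D)) \<le> s"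
    and A3: "(a/2) * (1 + eta*q*M*(a/2) powr (q-2) / (16 * real m))^N \<ge> P' * a + \<tau>"
begin

definition "v t j r i = vinner d (W t j r) (xi i) - vinner d (W0 j r) (xi i)"
definition "\<delta>0 = eta / (real n * real m) * q * ((P+1)*s) powr (q-1) * (2*D)"

lemma cross_sum: "i0 < n \<Longrightarrow> (\<Sum>i<n. \<bar>vinner d (xi i) (xi i0)\<bar>) \<le> 2 * D"
proof -
  assume i0: "i0 < n"
  have "(\<Sum>i<n. \<bar>vinner d (xi i) (xi i0)\<bar>) \<le> (\<Sum>i<n. (if i = i0 then 3*D/2 else 0) + D/(4*real n))"
  proof (intro sum_mono)
    fix i assume i: "i \<in> {..<n}"
    show "\<bar>vinner d (xi i) (xi i0)\<bar> \<le> (if i = i0 then 3*D/2 else 0) + D/(4*real n)"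
    proof (cases "i = i0")
      case True
      have "D/2 \<le> vinner d (xi i0) (xi i0) \<and> vinner d (xi i0) (xi i0) \<le> 3*D/2" using xinorm i0 by auto
      moreover have "D/(4*real n) \<ge> 0" using D0 by simp
      moreover have "\<bar>vinner d (xi i0) (xi i0)\<bar> = vinner d (xi i0) (xi i0)"
        using calculation D0 by (intro abs_of_nonneg) linarith
      ultimately have "\<bar>vinner d (xi i0) (xi i0)\<bar> \<le> 3*D/2 + D/(4*real n)" by linarith
      then show ?thesis using True by simp
    next
      case False
      then show ?thesis using cross i i0 by auto
    qed
  qed
  also have "\<dots> = 3*D/2 + D/4" using i0 n1 by (simp add: sum.distrib)
  also have "\<dots> \<le> 2 * D" using D0 by simp
  finally show ?thesis .
qed

lemma v_step:
  assumes i0: "i0 < n" and j: "j \<in> {1,-1}"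
    and bnd: "\<forall>i<n. vinner d (W t j r) (xi i) \<le> (P+1)*s"
  shows "\<bar>v (Suc t) j r i0 - v t j r i0\<bar> \<le> \<delta>0"
proof -
  let ?B = "q * ((P+1)*s) powr (q-1)"
  have "\<bar>v (Suc t) j r i0 - v t j r i0\<bar> = eta / (real n * real m) *
       \<bar>\<Sum>i<n. lp t i * of_int (y i) * of_int j * act_deriv q (vinner d (W t j r) (xi i)) * vinner d (xi i) (xi i0)\<bar>"
    unfolding v_def xi_step[OF i0] using eta0 by (simp add: abs_mult)
  also have "\<dots> \<le> eta / (real n * real m) * (\<Sum>i<n. ?B * \<bar>vinner d (xi i) (xi i0)\<bar>)"
  proof (intro mult_left_mono order.trans[OF sum_abs] sum_mono)
    fix i assume i: "i \<in> {..<n}"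
    have yi: "\<bar>of_int (y i) :: real\<bar> = 1" using ylab i by auto
    have jj: "\<bar>of_int j :: real\<bar> = 1" using j by auto
    have l: "\<bar>lp t i\<bar> \<le> 1" using lp_nonneg lp_le1 unfolding lp_def by (metis abs_of_nonneg lp_def)
    have ad: "\<bar>act_deriv q (vinner d (W t j r) (xi i))\<bar> \<le> ?B"
      using act_deriv_le[of q "vinner d (W t j r) (xi i)" "(P+1)*s"] act_deriv_nonneg[of q] bnd i q2 P0 s0
      by auto
    have "\<bar>lp t i * of_int (y i) * of_int j * act_deriv q (vinner d (W t j r) (xi i)) * vinner d (xi i) (xi i0)\<bar>
       = \<bar>lp t i\<bar> * \<bar>act_deriv q (vinner d (W t j r) (xi i))\<bar> * \<bar>vinner d (xi i) (xi i0)\<bar>"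
      by (simp add: abs_mult yi jj)
    also have "\<dots> \<le> 1 * ?B * \<bar>vinner d (xi i) (xi i0)\<bar>"
      by (intro mult_right_mono mult_mono l ad) auto
    finally show "\<bar>lp t i * of_int (y i) * of_int j * act_deriv q (vinner d (W t j r) (xi i)) * vinner d (xi i) (xi i0)\<bar>
        \<le> ?B * \<bar>vinner d (xi i) (xi i0)\<bar>" by simp
  qed (use eta0 in auto)
  also have "\<dots> = eta / (real n * real m) * ?B * (\<Sum>i<n. \<bar>vinner d (xi i) (xi i0)\<bar>)"
    by (simp add: sum_distrib_left mult.assoc)
  also have "\<dots> \<le> eta / (real n * real m) * ?B * (2 * D)"
    using cross_sum[OF i0] eta0 q2 by (intro mult_left_mono) auto
  finally show ?thesis unfolding \<delta>0_def by (simp add: algebra_simps)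
qed

lemma v_bound:
  "t \<le> N \<Longrightarrow> \<forall>j\<in>{1,-1}. \<forall>r<m. \<forall>i<n. \<bar>v t j r i\<bar> \<le> real t * \<delta>0"
proof (induction t)
  case 0 then show ?case unfolding v_def by simp
next
  case (Suc t)
  have d0: "\<delta>0 \<ge> 0" unfolding \<delta>0_def using eta0 q2 D0 by simp
  have tN: "real t * \<delta>0 \<le> s"
  proof -
    have "real t * \<delta>0 \<le> real N * \<delta>0" using Suc.prems d0 by (intro mult_right_mono) auto
    then show ?thesis using A2 unfolding \<delta>0_def by linarith
  qed
  show ?case
  proof (intro ballI allI impI)
    fix j :: int and r i assume j: "j \<in> {1,-1}" and r: "r < m" and i: "i < n"
    have IH: "\<forall>j\<in>{1,-1}. \<forall>r<m. \<forall>i<n. \<bar>v t j r i\<bar> \<le> real t * \<delta>0" using Suc by auto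
    have bnd: "\<forall>i<n. vinner d (W t j r) (xi i) \<le> (P+1)*s"
    proof (intro allI impI)
      fix i assume i: "i < n"
      have "vinner d (W t j r) (xi i) = vinner d (W0 j r) (xi i) + v t j r i" unfolding v_def by simp
      also have "\<dots> \<le> P * s + s" using W0xi IH tN j r i by fastforce
      finally show "vinner d (W t j r) (xi i) \<le> (P+1)*s" by (simp add: algebra_simps)
    qed
    have "\<bar>v (Suc t) j r i\<bar> \<le> \<bar>v t j r i\<bar> + \<bar>v (Suc t) j r i - v t j r i\<bar>" by linarith
    also have "\<dots> \<le> real t * \<delta>0 + \<delta>0" using IH v_step[OF i j bnd] j r i by fastforce
    finally show "\<bar>v (Suc t) j r i\<bar> \<le> real (Suc t) * \<delta>0" by (simp add: algebra_simps)
  qed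
qed

lemma v_bound_s: "t \<le> N \<Longrightarrow> j \<in> {1,-1} \<Longrightarrow> r < m \<Longrightarrow> i < n \<Longrightarrow> \<bar>v t j r i\<bar> \<le> s"
proof -
  assume t: "t \<le> N" and j: "j \<in> {1,-1}" and r: "r < m" and i: "i < n"
  have d0: "\<delta>0 \<ge> 0" unfolding \<delta>0_def using eta0 q2 D0 by simp
  have "real t * \<delta>0 \<le> real N * \<delta>0" using t d0 by (intro mult_right_mono) auto
  then show ?thesis using A2 v_bound[OF t] j r i unfolding \<delta>0_def by fastforce
qed

lemma netF_nonneg: "netF q d m Wx j mu yi xii \<ge> 0"
  unfolding netF_def by (intro mult_nonneg_nonneg sum_nonneg add_nonneg_nonneg act_nonneg) auto

lemma mu_inner_y: "j \<in> {1,-1} \<Longrightarrow> of_int j * vinner d (W t j r) mu = of_int j * vinner d (W0 j r) mu + g t j r"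
  unfolding g_def by (auto simp: algebra_simps)

lemma netF_le1:
  assumes t: "t \<le> N" and j: "j \<in> {1,-1}" and i: "i < n" and yi: "y i = j"
    and small: "\<forall>r<m. g t j r < \<tau>"
  shows "netF q d m (W t) j mu (y i) (xi i) \<le> 1"
proof -
  have "(\<Sum>r<m. act q (vinner d (W t j r) (\<lambda>k. of_int (y i) * mu k)) + act q (vinner d (W t j r) (xi i)))
      \<le> (\<Sum>r<m. 1/2 + 1/2)"
  proof (intro sum_mono add_mono)
    fix r assume r: "r \<in> {..<m}"
    have "vinner d (W t j r) (\<lambda>k. of_int (y i) * mu k) = of_int j * vinner d (W0 j r) mu + g t j r"
      unfolding vinner_scale2 yi mu_inner_y[OF j] by simp
    also have "\<dots> \<le> P' * a + \<tau>"
    proof -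
      have "\<bar>of_int j * vinner d (W0 j r) mu\<bar> = \<bar>vinner d (W0 j r) mu\<bar>" using j by (auto simp: abs_mult)
      moreover have "\<bar>vinner d (W0 j r) mu\<bar> \<le> P' * a" using W0mu j r by auto
      moreover have "g t j r < \<tau>" using small r by auto
      ultimately show ?thesis by linarith
    qed
    finally show "act q (vinner d (W t j r) (\<lambda>k. of_int (y i) * mu k)) \<le> 1/2"
      using Fb1 q2 by (intro act_le_half) auto
    have "vinner d (W t j r) (xi i) = vinner d (W0 j r) (xi i) + v t j r i" unfolding v_def by simp
    also have "\<dots> \<le> P * s + s" using W0xi v_bound_s[OF t j _ i, of r] j r i by fastforce
    finally show "act q (vinner d (W t j r) (xi i)) \<le> 1/2"
      using Fb2 q2 by (intro act_le_half) (auto simp: algebra_simps)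
  qed
  then show ?thesis unfolding netF_def using m1 by (simp add: field_simps)
qed

lemma lp_big:
  assumes t: "t \<le> N" and j: "j \<in> {1,-1}" and i: "i < n" and yi: "y i = j"
    and small: "\<forall>r<m. g t j r < \<tau>"
  shows "lp t i \<ge> 1/4"
proof -
  have F: "netF q d m (W t) j mu (y i) (xi i) \<le> 1" by (rule netF_le1[OF assms])
  have "of_int (y i) * netf q d m (W t) mu (y i) (xi i) \<le> 1"
    using j F netF_nonneg[of "W t" "1" "y i" "xi i"] netF_nonneg[of "W t" "-1" "y i" "xi i"] yi
    unfolding netf_def by auto
  then show ?thesis unfolding lp_def by (rule lp_ge)
qed

definition "B = eta*q*M*(a/2) powr (q-2) / (16 * real m)"

lemma growth:
  assumes j: "j \<in> {1,-1}"
  shows "\<exists>r<m. g N j r \<ge> \<tau>"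
proof (rule ccontr)
  assume "\<not> ?thesis"
  then have smallN: "\<forall>r<m. g N j r < \<tau>" by auto
  have small: "\<forall>r<m. g t j r < \<tau>" if "t \<le> N" for t
    using smallN g_mono[OF j that] by (meson order_le_less_trans)
  obtain r0 where r0: "r0 < m" and good: "of_int j * vinner d (W0 j r0) mu \<ge> a/2" using W0good j by auto
  define x where "x t = of_int j * vinner d (W t j r0) mu" for t
  have B0: "B \<ge> 0" unfolding B_def using eta0 q2 Mpos a0 by simp
  let ?S = "{i. i < n \<and> y i = j}"
  have xgrow: "x t \<ge> (a/2) * (1 + B)^t" if "t \<le> N" for t
    using that
  proof (induction t)
    case 0 then show ?case using good unfolding x_def by simp
  next
    case (Suc t)
    then have tN: "t \<le> N" and IH: "x t \<ge> (a/2) * (1 + B)^t" by auto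
    have "1 \<le> (1 + B)^t" using B0 by simp
    then have "(a/2) * 1 \<le> (a/2) * (1 + B)^t" using a0 by (intro mult_left_mono) auto
    then have xa: "x t \<ge> a/2" using IH by linarith
    have xpos: "x t > 0" using xa a0 by simp
    have diff: "x (Suc t) = x t + eta * M / (real n * real m) *
       (\<Sum>i<n. lp t i * act_deriv q (vinner d (W t j r0) (\<lambda>k. of_int (y i) * mu k)))"
      unfolding x_def mu_inner_y[OF j] g_step[OF j] by simp
    have nonneg: "\<And>i. 0 \<le> lp t i * act_deriv q (vinner d (W t j r0) (\<lambda>k. of_int (y i) * mu k))"
      using q2 by (intro mult_nonneg_nonneg lp_nonneg act_deriv_nonneg) auto
    have "(\<Sum>i\<in>?S. 1/4 * (q * x t powr (q-1))) \<le> (\<Sum>i\<in>?S. lp t i * act_deriv q (vinner d (W t j r0) (\<lambda>k. of_int (y i) * mu k)))"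
    proof (intro sum_mono mult_mono)
      fix i assume i: "i \<in> ?S"
      show "1/4 \<le> lp t i" using lp_big[OF tN j _ _ small[OF tN]] i by auto
      have "vinner d (W t j r0) (\<lambda>k. of_int (y i) * mu k) = x t"
        unfolding vinner_scale2 x_def using i by simp
      then show "q * x t powr (q-1) \<le> act_deriv q (vinner d (W t j r0) (\<lambda>k. of_int (y i) * mu k))"
        unfolding act_deriv_def using xpos by simp
      show "0 \<le> lp t i" by (rule lp_nonneg)
      show "0 \<le> q * x t powr (q-1)" using q2 by simp
    qed
    also have "\<dots> \<le> (\<Sum>i<n. lp t i * act_deriv q (vinner d (W t j r0) (\<lambda>k. of_int (y i) * mu k)))"
      by (intro sum_mono2 nonneg) auto
    finally have S1: "real (card ?S) * (1/4 * (q * x t powr (q-1))) \<le> (\<Sum>i<n. lp t i * act_deriv q (vinner d (W t j r0) (\<lambda>k. of_int (y i) * mu k)))"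
      by simp
    have "x t powr (q-1) = x t powr (q-2) * x t"
    proof -
      have "x t powr (q-1) = x t powr ((q-2) + 1)" by simp
      also have "\<dots> = x t powr (q-2) * x t powr 1" by (rule powr_add)
      finally show ?thesis using xpos by simp
    qed
    also have "\<dots> \<ge> (a/2) powr (q-2) * x t"
      using xa xpos a0 q2 by (intro mult_right_mono powr_mono2) auto
    finally have xp: "x t powr (q-1) \<ge> (a/2) powr (q-2) * x t" .
    have "real n / 4 * (1/4 * (q * ((a/2) powr (q-2) * x t))) \<le> real (card ?S) * (1/4 * (q * x t powr (q-1)))"
      using cardj j xp q2 xpos by (intro mult_mono) auto
    with S1 have S2: "real n / 16 * q * (a/2) powr (q-2) * x t \<le> (\<Sum>i<n. lp t i * act_deriv q (vinner d (W t j r0) (\<lambda>k. of_int (y i) * mu k)))"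
      by (simp add: algebra_simps)
    have "B * x t = eta * M / (real n * real m) * (real n / 16 * q * (a/2) powr (q-2) * x t)"
      unfolding B_def using n1 by (simp add: field_simps)
    also have "\<dots> \<le> eta * M / (real n * real m) * (\<Sum>i<n. lp t i * act_deriv q (vinner d (W t j r0) (\<lambda>k. of_int (y i) * mu k)))"
      using S2 eta0 Mpos by (intro mult_left_mono) auto
    finally have "x (Suc t) \<ge> x t * (1 + B)" using diff by (simp add: algebra_simps)
    moreover have "x t * (1 + B) \<ge> (a/2) * (1 + B)^t * (1 + B)"
      using IH B0 by (intro mult_right_mono) auto
    ultimately show ?case by (simp add: algebra_simps)
  qed
  have "x N \<ge> P' * a + \<tau>" using xgrow[of N] A3 unfolding B_def by simp
  moreover have "x N = of_int j * vinner d (W0 j r0) mu + g N j r0" unfolding x_def mu_inner_y[OF j] ..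
  moreover have "of_int j * vinner d (W0 j r0) mu \<le> P' * a"
  proof -
    have "\<bar>of_int j * vinner d (W0 j r0) mu\<bar> = \<bar>vinner d (W0 j r0) mu\<bar>" using j by (auto simp: abs_mult)
    moreover have "\<bar>vinner d (W0 j r0) mu\<bar> \<le> P' * a" using W0mu j r0 by auto
    ultimately show ?thesis by linarith
  qed
  ultimately show False using smallN r0 by fastforce
qed

end



lemma gram_bound:
  fixes \<rho> w :: "nat \<Rightarrow> real" and c :: "nat \<Rightarrow> nat \<Rightarrow> real"
  assumes n1: "n \<ge> 1"
    and eq: "\<forall>i<n. \<rho> i + (\<Sum>i'\<in>{..<n}-{i}. \<rho> i' * c i' i) = w i"
    and cb: "\<forall>i<n. \<forall>i'<n. i' \<noteq> i \<longrightarrow> \<bar>c i' i\<bar> \<le> 1 / (2 * real n)"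
    and wb: "\<forall>i<n. \<bar>w i\<bar> \<le> s"
  shows "\<forall>i<n. \<bar>\<rho> i\<bar> \<le> 2 * s"
proof -
  define R where "R = Max ((\<lambda>i. \<bar>\<rho> i\<bar>) ` {..<n})"
  have fin: "finite ((\<lambda>i. \<bar>\<rho> i\<bar>) ` {..<n})" by simp
  have ne: "(\<lambda>i. \<bar>\<rho> i\<bar>) ` {..<n} \<noteq> {}" using n1 by (auto simp: lessThan_empty_iff)
  have Rge: "\<bar>\<rho> i\<bar> \<le> R" if "i < n" for i unfolding R_def using fin that by (intro Max_ge) auto
  obtain i0 where i0: "i0 < n" and Ri0: "R = \<bar>\<rho> i0\<bar>"
    using Max_in[OF fin ne] unfolding R_def by auto
  have R0: "R \<ge> 0" using Ri0 by simp
  have "\<bar>\<rho> i0\<bar> \<le> \<bar>w i0\<bar> + \<bar>\<Sum>i'\<in>{..<n}-{i0}. \<rho> i' * c i' i0\<bar>"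
  proof -
    have "\<rho> i0 = w i0 - (\<Sum>i'\<in>{..<n}-{i0}. \<rho> i' * c i' i0)" using eq i0 by (simp add: algebra_simps)
    then show ?thesis by linarith
  qed
  also have "\<bar>\<Sum>i'\<in>{..<n}-{i0}. \<rho> i' * c i' i0\<bar> \<le> (\<Sum>i'\<in>{..<n}-{i0}. R * (1 / (2 * real n)))"
  proof (intro order.trans[OF sum_abs] sum_mono)
    fix i' assume i': "i' \<in> {..<n}-{i0}"
    have "\<bar>\<rho> i' * c i' i0\<bar> = \<bar>\<rho> i'\<bar> * \<bar>c i' i0\<bar>" by (simp add: abs_mult)
    also have "\<dots> \<le> R * (1 / (2 * real n))"
      using i' i0 cb Rge R0 by (intro mult_mono) auto
    finally show "\<bar>\<rho> i' * c i' i0\<bar> \<le> R * (1 / (2 * real n))" .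
  qed
  also have "\<dots> = real (n - 1) * (R * (1 / (2 * real n)))" using i0 by (simp add: card_Diff_singleton)
  also have "\<dots> \<le> real n * (R * (1 / (2 * real n)))" using R0 by (intro mult_right_mono) auto
  also have "\<dots> = R / 2" using n1 by (simp add: field_simps)
  finally have "R \<le> s + R / 2" using wb i0 Ri0 by smt
  then have "R \<le> 2 * s" by linarith
  then show ?thesis using Rge by (meson order_trans)
qed

lemma vinner_nonneg: "vinner d u u \<ge> 0" unfolding vinner_def by (simp add: sum_nonneg)
lemma vnorm_sq: "(vnorm d u)\<^sup>2 = vinner d u u" unfolding vnorm_def using vinner_nonneg by simp

lemma decomp_inner:
  assumes "\<forall>k<d. Wx k = W0x k + c * mu k / A + (\<Sum>i<n. \<rho> i * xi i k / Bq i)"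
  shows "vinner d Wx u = vinner d W0x u + c * vinner d mu u / A + (\<Sum>i<n. \<rho> i * vinner d (xi i) u / Bq i)"
proof -
  have "vinner d Wx u = (\<Sum>k<d. (W0x k + c * mu k / A + (\<Sum>i<n. \<rho> i * xi i k / Bq i)) * u k)"
    unfolding vinner_def using assms by (intro sum.cong) auto
  also have "\<dots> = vinner d W0x u + c * vinner d mu u / A + (\<Sum>i<n. \<rho> i * vinner d (xi i) u / Bq i)"
    unfolding vinner_def
    by (simp add: algebra_simps sum.distrib sum_distrib_left sum_distrib_right sum_divide_distrib sum.swap[where A="{..<d}"])
  finally show ?thesis .
qed




context gdmain begin

lemma final_concl:
  "\<forall>\<gamma> \<rho>. (\<forall>t. \<forall>j\<in>{1,-1}. \<forall>r<m. \<forall>k<d.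
               W t j r k = W0 j r k + of_int j * \<gamma> t j r * mu k / (vnorm d mu)\<^sup>2
                           + (\<Sum>i<n. \<rho> t j r i * xi i k / (vnorm d (xi i))\<^sup>2))
          \<longrightarrow> (\<forall>j\<in>{1,-1}. \<exists>r<m. \<gamma> N j r \<ge> \<tau>)
            \<and> (\<forall>j\<in>{1,-1}. \<forall>r<m. \<forall>i<n. \<forall>t\<le>N. \<bar>\<rho> t j r i\<bar> \<le> 2 * s)"
proof (intro allI impI conjI)
  fix \<gamma> :: "nat \<Rightarrow> int \<Rightarrow> nat \<Rightarrow> real" and \<rho> :: "nat \<Rightarrow> int \<Rightarrow> nat \<Rightarrow> nat \<Rightarrow> real"
  assume H: "\<forall>t. \<forall>j\<in>{1,-1}. \<forall>r<m. \<forall>k<d.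
               W t j r k = W0 j r k + of_int j * \<gamma> t j r * mu k / (vnorm d mu)\<^sup>2
                           + (\<Sum>i<n. \<rho> t j r i * xi i k / (vnorm d (xi i))\<^sup>2)"
  have inner: "vinner d (W t j r) u = vinner d (W0 j r) u + of_int j * \<gamma> t j r * vinner d mu u / (vnorm d mu)\<^sup>2
      + (\<Sum>i<n. \<rho> t j r i * vinner d (xi i) u / (vnorm d (xi i))\<^sup>2)"
    if j: "j \<in> {1,-1}" and r: "r < m" for t j r u
  proof -
    have "\<forall>k<d. W t j r k = W0 j r k + (of_int j * \<gamma> t j r) * mu k / (vnorm d mu)\<^sup>2
                           + (\<Sum>i<n. \<rho> t j r i * xi i k / (vnorm d (xi i))\<^sup>2)"
      using H j r by blast
    from decomp_inner[OF this, of u] show ?thesis by simp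
  qed
  have gam: "g t j r = \<gamma> t j r" if j: "j \<in> {1,-1}" and r: "r < m" for t j r
  proof -
    have z: "(\<Sum>i<n. \<rho> t j r i * vinner d (xi i) mu / (vnorm d (xi i))\<^sup>2) = 0"
      using orth by (intro sum.neutral) auto
    have "vinner d (W t j r) mu = vinner d (W0 j r) mu + of_int j * \<gamma> t j r"
    proof -
      have "vinner d (W t j r) mu = vinner d (W0 j r) mu + of_int j * \<gamma> t j r * M / (vnorm d mu)\<^sup>2" 
        using inner[OF j r, of t mu] z by linarith
      then show ?thesis using Mpos by (simp add: vnorm_sq)
    qed
    then show ?thesis unfolding g_def using j by auto
  qed
  show "\<forall>j\<in>{1,-1}. \<exists>r<m. \<gamma> N j r \<ge> \<tau>"
  proof
    fix j :: int assume j: "j \<in> {1,-1}"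
    obtain r where "r < m" "g N j r \<ge> \<tau>" using growth[OF j] by auto
    then show "\<exists>r<m. \<gamma> N j r \<ge> \<tau>" using gam[OF j] by auto
  qed
  show "\<forall>j\<in>{1,-1}. \<forall>r<m. \<forall>i<n. \<forall>t\<le>N. \<bar>\<rho> t j r i\<bar> \<le> 2 * s"
  proof (intro ballI allI impI)
    fix j :: int and r i t assume j: "j \<in> {1,-1}" and r: "r < m" and i: "i < n" and t: "t \<le> N"
    define c where "c i' i0 = vinner d (xi i') (xi i0) / vinner d (xi i') (xi i')" for i' i0
    have eq: "\<forall>i0<n. \<rho> t j r i0 + (\<Sum>i'\<in>{..<n}-{i0}. \<rho> t j r i' * c i' i0) = v t j r i0"
    proof (intro allI impI)
      fix i0 assume i0: "i0 < n"
      have o0: "vinner d mu (xi i0) = 0" using orth i0 vinner_sym by metis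
      have "D/2 \<le> vinner d (xi i0) (xi i0)" using xinorm i0 by blast
      then have pos: "vinner d (xi i0) (xi i0) > 0" using D0 by linarith
      have e1: "vinner d (W t j r) (xi i0) = vinner d (W0 j r) (xi i0) + of_int j * \<gamma> t j r * vinner d mu (xi i0) / (vnorm d mu)\<^sup>2
      + (\<Sum>i<n. \<rho> t j r i * vinner d (xi i) (xi i0) / (vnorm d (xi i))\<^sup>2)" by (rule inner[OF j r])
      have "v t j r i0 = (\<Sum>i<n. \<rho> t j r i * vinner d (xi i) (xi i0) / (vnorm d (xi i))\<^sup>2)"
        unfolding v_def e1 o0 by simp
      also have "\<dots> = (\<Sum>i<n. \<rho> t j r i * c i i0)" unfolding vnorm_sq c_def by (simp only: times_divide_eq_right)
      also have "\<dots> = \<rho> t j r i0 * c i0 i0 + (\<Sum>i'\<in>{..<n}-{i0}. \<rho> t j r i' * c i' i0)"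
        using i0 by (intro sum.remove) simp_all
      also have "c i0 i0 = 1" unfolding c_def using pos by simp
      finally show "\<rho> t j r i0 + (\<Sum>i'\<in>{..<n}-{i0}. \<rho> t j r i' * c i' i0) = v t j r i0" by simp
    qed
    have cb: "\<forall>i0<n. \<forall>i'<n. i' \<noteq> i0 \<longrightarrow> \<bar>c i' i0\<bar> \<le> 1 / (2 * real n)"
    proof (intro allI impI)
      fix i0 i' assume i0: "i0 < n" and i': "i' < n" and ne: "i' \<noteq> i0"
      have lo: "vinner d (xi i') (xi i') \<ge> D/2" using xinorm i' by blast
      have num: "\<bar>vinner d (xi i') (xi i0)\<bar> \<le> D/(4*real n)" using cross i' i0 ne by blast
      have "\<bar>c i' i0\<bar> = \<bar>vinner d (xi i') (xi i0)\<bar> / vinner d (xi i') (xi i')"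
      proof -
        have "vinner d (xi i') (xi i') > 0" using lo D0 by linarith
        then show ?thesis unfolding c_def by (simp only: abs_divide abs_of_pos)
      qed
      also have "\<dots> \<le> (D/(4*real n)) / (D/2)"
        using lo num D0 by (intro frac_le) auto
      also have "\<dots> = 1 / (2 * real n)" using D0 n1 by (simp add: field_simps)
      finally show "\<bar>c i' i0\<bar> \<le> 1 / (2 * real n)" .
    qed
    have wb: "\<forall>i0<n. \<bar>v t j r i0\<bar> \<le> s" using v_bound_s[OF t j r] by auto
    show "\<bar>\<rho> t j r i\<bar> \<le> 2 * s" using gram_bound[OF n1 eq cb wb] i by auto
  qed
qed

end



lemma ln2_ge: "ln (2::real) \<ge> 1/2"
proof -
  have "exp (1/2::real) * exp (1/2) = exp 1" by (simp add: exp_add[symmetric])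
  also have "\<dots> \<le> 3" using exp_le by simp
  finally have "exp (1/2::real) * exp (1/2) \<le> 3" .
  have "exp (1/2::real) \<le> 2"
  proof (rule ccontr)
    assume "\<not> exp (1/2::real) \<le> 2"
    then have "exp (1/2::real) * exp (1/2) > 2 * 2" by (intro mult_strict_mono) auto
    with \<open>exp (1/2::real) * exp (1/2) \<le> 3\<close> show False by simp
  qed
  then show ?thesis by (subst ln_ge_iff) auto
qed

lemma ln3_ge: "ln (3::real) \<ge> 1"
proof -
  have "exp (1::real) \<le> 3" using exp_le by simp
  then show ?thesis by (subst ln_ge_iff) simp_all
qed

lemma ident:
  fixes s0 z nm q :: real
  assumes "s0 > 0" "z > 0" "nm > 0"
  shows "(s0*z) powr (q-1) * z\<^sup>2 / (nm\<^sup>2 * (s0*nm) powr (q-2)) = (s0*z) / ((nm/z) powr q)"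
proof -
  have p1: "x powr (q-1) = x powr (q-2) * x" if "x > 0" for x :: real
  proof -
    have "x powr (q-1) = x powr ((q-2) + 1)" by simp
    also have "\<dots> = x powr (q-2) * x powr 1" by (rule powr_add)
    finally show ?thesis using that by simp
  qed
  have p2: "x powr q = x powr (q-2) * x\<^sup>2" if "x > 0" for x :: real
  proof -
    have "x powr q = x powr ((q-2) + 2)" by simp
    also have "\<dots> = x powr (q-2) * x powr 2" by (rule powr_add)
    finally show ?thesis using that by simp
  qed
  have "(s0*z) powr (q-1) = s0 powr (q-2) * s0 * (z powr (q-2) * z)"
    using assms by (simp add: powr_mult p1)
  moreover have "(s0*nm) powr (q-2) = s0 powr (q-2) * nm powr (q-2)" by (simp add: powr_mult)
  moreover have "(nm/z) powr q = nm powr (q-2) * nm\<^sup>2 / (z powr (q-2) * z\<^sup>2)"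
    using assms by (simp add: powr_divide p2)
  ultimately show ?thesis using assms by (simp add: field_simps power2_eq_square)
qed

lemma core:
  fixes q :: real and d m n :: nat and \<delta> \<sigma>p \<sigma>0 \<eta> :: real and mu :: "nat \<Rightarrow> real"
    and y :: "nat \<Rightarrow> int" and xi :: "nat \<Rightarrow> nat \<Rightarrow> real" and W0 :: "int \<Rightarrow> nat \<Rightarrow> nat \<Rightarrow> real"
    and C \<kappa> L SNR :: real
  assumes q2: "q > 2"
    and C_def: "C = 2 powr (q+1) * 2 powr (q+3) * 3 powr (q-1) * q * 1024"
    and \<kappa>_def: "\<kappa> = q + 1"
    and L_def: "L = ln (real m * real n * real d / \<delta>)"
    and SNR_def: "SNR = vnorm d mu / (\<sigma>p * sqrt (real d))"
    and d1: "d \<ge> 1" and m1: "m \<ge> 1" and n1: "n \<ge> 1" and \<delta>0: "0 < \<delta>" and \<delta>1: "\<delta> < 1"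
    and \<sigma>p0: "\<sigma>p > 0" and \<sigma>00: "\<sigma>0 > 0" and \<eta>0: "\<eta> > 0"
    and nm0: "vnorm d mu > 0"
    and ylab: "\<forall>i<n. y i \<in> {1, -1}"
    and orth: "\<forall>i<n. vinner d (xi i) mu = 0"
    and EP: "E_prelim d m n \<delta> \<sigma>p \<sigma>0 mu y xi W0"
    and Hd: "real d \<ge> C * L powr \<kappa> * real m powr (max 2 (4 / (q - 2)))
                  * real n powr (max 4 ((2 * q - 2) / (q - 2)))"
    and H\<eta>: "\<eta> \<le> min (1 / (vnorm d mu)\<^sup>2) (1 / (\<sigma>p\<^sup>2 * real d)) / (C * L powr \<kappa>)"
    and H\<sigma>lo: "\<sigma>0 \<ge> C * L powr \<kappa> * real n / sqrt (real d)
                * min (1 / (\<sigma>p * sqrt (real d))) (1 / vnorm d mu)"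
    and H\<sigma>up: "\<sigma>0 \<le> real m powr (- 2 / (q - 2)) * real n powr (- max (1 / (q - 2)) 1)
                * min (1 / (\<sigma>p * sqrt (real d))) (1 / vnorm d mu) / (C * L powr \<kappa>)"
    and Hsnr: "real n * SNR powr q \<ge> C * L powr \<kappa>"
  shows "\<exists>T1::nat.
       real T1 \<le> C * L powr \<kappa> * real m / (\<eta> * \<sigma>0 powr (q - 2) * vnorm d mu powr q)
     \<and> (\<forall>\<gamma> \<rho>. (\<forall>t. \<forall>j\<in>{1,-1}. \<forall>r<m. \<forall>k<d.
               gd q d m n mu y xi \<eta> W0 t j r k = W0 j r k + of_int j * \<gamma> t j r * mu k / (vnorm d mu)\<^sup>2
                           + (\<Sum>i<n. \<rho> t j r i * xi i k / (vnorm d (xi i))\<^sup>2))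
          \<longrightarrow> (\<forall>j\<in>{1,-1}. \<exists>r<m. \<gamma> T1 j r \<ge> 1 / C)
            \<and> (\<forall>j\<in>{1,-1}. \<forall>r<m. \<forall>i<n. \<forall>t\<le>T1.
                  \<bar>\<rho> t j r i\<bar> \<le> C * \<sigma>0 * \<sigma>p * sqrt (real d)))"
proof -
  define nm where "nm = vnorm d mu"
  define z where "z = \<sigma>p * sqrt (real d)"
  define s where "s = \<sigma>0 * z"
  define a where "a = \<sigma>0 * nm"
  define D where "D = \<sigma>p\<^sup>2 * real d"
  define M where "M = vinner d mu mu"
  define P where "P = 2 * sqrt (ln (8 * real m * real n / \<delta>))"
  define P' where "P' = sqrt (2 * ln (8 * real m / \<delta>))"
  define \<tau> where "\<tau> = 1 / C"
  have nm0': "nm > 0" using nm0 nm_def by simp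
  have Mnm: "M = nm\<^sup>2" unfolding M_def nm_def vnorm_sq ..
  have z0: "z > 0" unfolding z_def using \<sigma>p0 d1 by simp
  have Dz: "D = z\<^sup>2" unfolding D_def z_def using d1 by (simp add: power_mult_distrib)
  have s0: "s > 0" unfolding s_def using \<sigma>00 z0 by simp
  have a0: "a > 0" unfolding a_def using \<sigma>00 nm0' by simp
  have SNRz: "SNR = nm / z" unfolding SNR_def nm_def z_def ..
  have SNR0: "SNR > 0" using SNRz nm0' z0 by simp
  have e1: "2 powr (q+1) \<ge> (1::real)" using q2 by (intro ge_one_powr_ge_zero) auto
  have e2: "2 powr (q+3) \<ge> (1::real)" using q2 by (intro ge_one_powr_ge_zero) auto
  have e3: "3 powr (q-1) \<ge> (1::real)" using q2 by (intro ge_one_powr_ge_zero) auto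
  have C1: "C \<ge> 2048"
  proof -
    have "2 powr (q+1) * 2 powr (q+3) * 3 powr (q-1) * q \<ge> 1 * 1 * 1 * 2"
      using e1 e2 e3 q2 by (intro mult_mono) auto
    then show ?thesis unfolding C_def by linarith
  qed
  have C0: "C > 0" using C1 by simp
  have EPc1: "real (card {i. i < n \<and> y i = 1}) \<ge> real n / 4"
    and EPc2: "real (card {i. i < n \<and> y i = -1}) \<ge> real n / 4"
    and EPxn: "\<forall>i<n. \<sigma>p\<^sup>2 * real d / 2 \<le> (vnorm d (xi i))\<^sup>2 \<and> (vnorm d (xi i))\<^sup>2 \<le> 3 * \<sigma>p\<^sup>2 * real d / 2"
    and EPcr: "\<forall>i<n. \<forall>i'<n. i \<noteq> i' \<longrightarrow>
        \<bar>vinner d (xi i) (xi i')\<bar> \<le> 2 * \<sigma>p\<^sup>2 * sqrt (real d * ln (4 * (real n)\<^sup>2 / \<delta>))"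
    and EPmu: "\<forall>j\<in>{1,-1}. \<forall>r<m.
        \<bar>vinner d (W0 j r) mu\<bar> \<le> sqrt (2 * ln (8 * real m / \<delta>)) * \<sigma>0 * vnorm d mu"
    and EPxi: "\<forall>j\<in>{1,-1}. \<forall>r<m. \<forall>i<n.
        \<bar>vinner d (W0 j r) (xi i)\<bar> \<le> 2 * sqrt (ln (8 * real m * real n / \<delta>)) * \<sigma>0 * \<sigma>p * sqrt (real d)"
    and EPg: "\<forall>j\<in>{1,-1}. \<exists>r<m. of_int j * vinner d (W0 j r) mu \<ge> \<sigma>0 * vnorm d mu / 2"
    using EP unfolding E_prelim_def by blast+
  have d2: "d \<ge> 2"
  proof (rule ccontr)
    assume "\<not> d \<ge> 2"
    with d1 have dd: "d = 1" by simp
    have "vinner d mu mu > 0" using Mnm nm0' M_def by simp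
    then have mu0: "mu 0 \<noteq> 0" unfolding vinner_def dd by auto
    have "vinner d (xi 0) mu = 0" using orth n1 by auto
    then have "xi 0 0 = 0" using mu0 unfolding vinner_def dd by simp
    then have "vinner d (xi 0) (xi 0) = 0" unfolding vinner_def dd by simp
    moreover have "\<sigma>p\<^sup>2 * real d / 2 \<le> (vnorm d (xi 0))\<^sup>2" using EPxn n1 by auto
    moreover have "\<sigma>p\<^sup>2 * real d > 0" using \<sigma>p0 d1 by simp
    ultimately show False unfolding vnorm_sq by simp
  qed
  have mnd: "real m * real n * real d / \<delta> \<ge> real d"
  proof -
    have "real m * real n \<ge> 1" proof -
      have "real m \<ge> 1" "real n \<ge> 1" using m1 n1 by auto
      then show ?thesis using mult_mono[of 1 "real m" 1 "real n"] by simp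
    qed
    then have "real m * real n * real d \<ge> 1 * real d" by (intro mult_right_mono) auto
    then have "real m * real n * real d \<ge> real d" by simp
    also have "real m * real n * real d \<le> real m * real n * real d / \<delta>"
    proof -
      have "real m * real n * real d * \<delta> \<le> real m * real n * real d * 1" using \<delta>1 by (intro mult_left_mono) auto
      then show ?thesis using \<delta>0 by (simp add: le_divide_eq)
    qed
    finally show ?thesis .
  qed
  have Lln: "L \<ge> ln (real d)" unfolding L_def using mnd d1 by (subst ln_le_cancel_iff) auto
  have Lhalf: "L \<ge> 1/2"
  proof -
    have "ln (real d) \<ge> ln 2" using d2 by simp
    then show ?thesis using Lln ln2_ge by linarith
  qed
  have mpow: "real m powr (max 2 (4 / (q - 2))) \<ge> 1" using m1 q2 by (intro ge_one_powr_ge_zero) auto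
  have npow: "real n powr (max 4 ((2 * q - 2) / (q - 2))) \<ge> (real n)\<^sup>2"
  proof -
    have "real n powr (max 4 ((2 * q - 2) / (q - 2))) \<ge> real n powr 2" using n1 by (intro powr_mono) auto
    then show ?thesis by simp
  qed
  have n2: "(real n)\<^sup>2 \<ge> real n" using n1 by (simp add: power2_eq_square)
  have Lk0: "L powr \<kappa> \<ge> (1/2) powr \<kappa>" using Lhalf q2 \<kappa>_def by (intro powr_mono2) auto
  have dC: "real d \<ge> C * L powr \<kappa> * (real n)\<^sup>2"
  proof -
    have "C * L powr \<kappa> * (real n)\<^sup>2 \<le> C * L powr \<kappa> * real m powr (max 2 (4 / (q - 2))) * real n powr (max 4 ((2 * q - 2) / (q - 2)))"
    proof -
      have CL0: "C * L powr \<kappa> \<ge> 0" using C0 by simp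
      have "C * L powr \<kappa> * 1 \<le> C * L powr \<kappa> * real m powr (max 2 (4 / (q - 2)))"
        using mpow CL0 by (intro mult_left_mono) auto
      from mult_mono[OF this npow] show ?thesis using CL0 mpow n1 by simp
    qed
    then show ?thesis using Hd by linarith
  qed
  have d3: "real d \<ge> 3"
  proof -
    have "(1/2) powr \<kappa> * 2 powr (q+1) = 1" unfolding \<kappa>_def by (simp add: powr_mult[symmetric])
    then have "C * (1/2) powr \<kappa> = 2 powr (q+3) * 3 powr (q-1) * q * 1024" unfolding C_def
      by (simp add: algebra_simps)
    also have "\<dots> \<ge> 1 * 1 * 2 * 1024" using e2 e3 q2 by (intro mult_mono) auto
    finally have "C * (1/2) powr \<kappa> \<ge> 2048" by simp
    moreover have "C * L powr \<kappa> \<ge> C * (1/2) powr \<kappa>" using Lk0 C0 by simp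
    moreover have "C * L powr \<kappa> * (real n)\<^sup>2 \<ge> C * L powr \<kappa> * 1"
      using n1 C0 n2 by (intro mult_left_mono) auto
    ultimately show ?thesis using dC by linarith
  qed
  have L1: "L \<ge> 1"
  proof -
    have "ln (real d) \<ge> ln 3" using d3 by simp
    then show ?thesis using Lln ln3_ge by linarith
  qed
  have LkL: "L powr \<kappa> \<ge> L" using L1 q2 \<kappa>_def powr_mono[of 1 \<kappa> L] by simp
  have LkLq: "L powr \<kappa> \<ge> L powr q" using L1 q2 \<kappa>_def powr_mono[of q \<kappa> L] by simp
  have Lk1: "L powr \<kappa> \<ge> 1" using LkL L1 by simp
  define K0 where "K0 = C * L powr \<kappa>"
  have K0C: "K0 \<ge> C" unfolding K0_def using Lk1 C0 by (simp add: mult_le_cancel_left1)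
  have K00: "K0 > 0" using K0C C0 by simp
  have mz: "min (1 / (\<sigma>p * sqrt (real d))) (1 / vnorm d mu) = min (1/z) (1/nm)" unfolding z_def nm_def ..
  have up: "\<sigma>0 \<le> min (1/z) (1/nm) / K0"
  proof -
    have f1: "real m powr (- 2 / (q - 2)) \<le> 1"
      using powr_mono[of "- 2 / (q - 2)" 0 "real m"] m1 q2 by (simp add: divide_nonpos_pos)
    have f2: "real n powr (- max (1 / (q - 2)) 1) \<le> 1"
      using powr_mono[of "- max (1 / (q - 2)) 1" 0 "real n"] n1 by simp
    have Y0: "min (1/z) (1/nm) / K0 \<ge> 0" using z0 nm0' K00 by simp
    have "real m powr (- 2 / (q - 2)) * real n powr (- max (1 / (q - 2)) 1) \<le> 1 * 1"
      using f1 f2 by (intro mult_mono) auto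
    then have "real m powr (- 2 / (q - 2)) * real n powr (- max (1 / (q - 2)) 1) * (min (1/z) (1/nm) / K0)
      \<le> 1 * (min (1/z) (1/nm) / K0)" using Y0 by (intro mult_right_mono) auto
    then show ?thesis using H\<sigma>up unfolding mz K0_def by (simp add: mult.assoc)
  qed
  have sup: "s \<le> 1 / K0"
  proof -
    have "s \<le> min (1/z) (1/nm) / K0 * z" unfolding s_def using up z0 by (intro mult_right_mono) auto
    also have "\<dots> \<le> (1/z) / K0 * z" using z0 K00 by (intro mult_right_mono divide_right_mono) auto
    finally show ?thesis using z0 by simp
  qed
  have aup: "a \<le> 1 / K0"
  proof -
    have "a \<le> min (1/z) (1/nm) / K0 * nm" unfolding a_def using up nm0' by (intro mult_right_mono) auto
    also have "\<dots> \<le> (1/nm) / K0 * nm" using nm0' K00 by (intro mult_right_mono divide_right_mono) auto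
    finally show ?thesis using nm0' by simp
  qed
  have snrn: "min SNR 1 \<ge> 1 / real n"
  proof (cases "SNR \<ge> 1")
    case True then show ?thesis using n1 by simp
  next
    case False
    then have "SNR powr q \<le> SNR powr 1" using SNR0 q2 by (intro powr_mono') auto
    then have "real n * SNR \<ge> real n * SNR powr q" using SNR0 by (simp add: mult_left_mono)
    moreover have "real n * SNR powr q \<ge> 1" using Hsnr K0C C1 unfolding K0_def[symmetric] by linarith
    ultimately have "real n * SNR \<ge> 1" by linarith
    then have "SNR \<ge> 1 / real n" using n1 by (simp add: divide_le_eq mult.commute)
    then show ?thesis using False by simp
  qed
  have sd0: "sqrt (real d) > 0" using d1 by simp
  have alo: "a \<ge> 1 / sqrt (real d)"
  proof -
    have "min (1/z) (1/nm) * nm = min SNR 1" unfolding SNRz using nm0' z0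
      by (cases "1/z \<le> 1/nm") (auto simp: min_def field_simps)
    have A1: "a \<ge> K0 * real n / sqrt (real d) * min (1/z) (1/nm) * nm"
      unfolding a_def using H\<sigma>lo nm0' unfolding mz K0_def[symmetric] by (intro mult_right_mono) auto
    have A2: "K0 * real n / sqrt (real d) * min (1/z) (1/nm) * nm = K0 * real n / sqrt (real d) * min SNR 1"
      using \<open>min (1/z) (1/nm) * nm = min SNR 1\<close> by (simp add: mult.assoc)
    have A3: "K0 * real n / sqrt (real d) * min SNR 1 \<ge> K0 * real n / sqrt (real d) * (1 / real n)"
      using snrn K00 sd0 by (intro mult_left_mono) auto
    have A4: "K0 * real n / sqrt (real d) * (1 / real n) = K0 / sqrt (real d)" using n1 by simp
    have A5: "K0 / sqrt (real d) \<ge> 1 / sqrt (real d)" using K0C C1 sd0 by (intro divide_right_mono) auto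
    show ?thesis using A1 A2 A3 A4 A5 by linarith
  qed
  have etaM: "\<eta> * M \<le> 1 / K0"
  proof -
    have "\<eta> \<le> (1 / nm\<^sup>2) / K0"
    proof -
      have "\<eta> \<le> min (1 / nm\<^sup>2) (1 / (\<sigma>p\<^sup>2 * real d)) / K0" using H\<eta> unfolding nm_def K0_def .
      also have "\<dots> \<le> (1 / nm\<^sup>2) / K0" using K00 by (intro divide_right_mono) auto
      finally show ?thesis .
    qed
    then have "\<eta> * M \<le> (1 / nm\<^sup>2) / K0 * nm\<^sup>2" unfolding Mnm by (intro mult_right_mono) auto
    then show ?thesis using nm0' by simp
  qed
  have KCL: "K0 \<ge> C * L" unfolding K0_def using LkL C0 by simp
  have d2048: "real d \<ge> 2048 * (real n)\<^sup>2"
  proof -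
    have "K0 * (real n)\<^sup>2 \<ge> 2048 * (real n)\<^sup>2" using K0C C1 by (intro mult_right_mono) auto
    then show ?thesis using dC unfolding K0_def by linarith
  qed
  have nsq1: "(real n)\<^sup>2 \<ge> 1" using n1 n2 by linarith
  have mn1: "real m * real n \<ge> 1" using m1 n1 mult_mono[of 1 "real m" 1 "real n"] by simp
  have sqrtL: "sqrt L \<le> L"
  proof -
    have "sqrt L \<le> sqrt (L\<^sup>2)" using L1 by (intro real_sqrt_le_mono) (simp add: power2_eq_square)
    then show ?thesis using L1 by simp
  qed
  have lnP: "ln (8 * real m * real n / \<delta>) \<le> L"
  proof -
    have "8 * real m * real n / \<delta> \<le> real m * real n * real d / \<delta>"
    proof -
      have d8: "real d \<ge> 8" using d2048 nsq1 by linarith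
      have "8 * (real m * real n) \<le> real d * (real m * real n)" using d8 mn1 by (intro mult_right_mono) auto
      then show ?thesis using \<delta>0 by (intro divide_right_mono) (auto simp: mult.commute mult.left_commute)
    qed
    moreover have "8 * real m * real n / \<delta> > 0" using \<delta>0 m1 n1 by simp
    ultimately show ?thesis unfolding L_def by simp
  qed
  have lnP0: "ln (8 * real m * real n / \<delta>) \<ge> 0"
  proof -
    have "8 * real m * real n / \<delta> \<ge> 1" using mn1 \<delta>0 \<delta>1 by (simp add: le_divide_eq)
    then show ?thesis by simp
  qed
  have lnP': "ln (8 * real m / \<delta>) \<le> L"
  proof -
    have "8 * real m / \<delta> \<le> 8 * real m * real n / \<delta>" using n1 \<delta>0 m1 by (intro divide_right_mono) auto
    moreover have "8 * real m / \<delta> > 0" using \<delta>0 m1 by simp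
    ultimately show ?thesis using lnP by (smt (verit) ln_le_cancel_iff)
  qed
  have lnP'0: "ln (8 * real m / \<delta>) \<ge> 0"
  proof -
    have "8 * real m / \<delta> \<ge> 1" using m1 \<delta>0 \<delta>1 by (simp add: le_divide_eq)
    then show ?thesis by simp
  qed
  have P0: "P \<ge> 0" unfolding P_def using lnP0 by simp
  have P'0: "P' \<ge> 0" unfolding P'_def using lnP'0 by simp
  have PL: "P \<le> 2 * L"
  proof -
    have "sqrt (ln (8 * real m * real n / \<delta>)) \<le> sqrt L" using lnP by simp
    then show ?thesis unfolding P_def using sqrtL by linarith
  qed
  have P'L: "P' \<le> 2 * L"
  proof -
    have "sqrt (2 * ln (8 * real m / \<delta>)) \<le> sqrt ((2 * L)\<^sup>2)"
    proof -
      have h: "L * 1 \<le> L * L" using L1 by (intro mult_left_mono) auto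
      have h2: "(2*L)\<^sup>2 = 4*(L*L)" by (simp add: power2_eq_square)
      have "2 * ln (8 * real m / \<delta>) \<le> (2 * L)\<^sup>2" unfolding h2 using h lnP' L1 by linarith
      then show ?thesis by (rule real_sqrt_le_mono)
    qed
    moreover have "sqrt ((2 * L)\<^sup>2) = 2 * L" using L1 by (simp only: real_sqrt_abs)
    ultimately show ?thesis unfolding P'_def by linarith
  qed
  have cross: "\<forall>i<n. \<forall>i'<n. i \<noteq> i' \<longrightarrow> \<bar>vinner d (xi i) (xi i')\<bar> \<le> D/(4*real n)"
  proof (intro allI impI)
    fix i i' assume i: "i < n" and i': "i' < n" and ne: "i \<noteq> i'"
    have ln4: "ln (4 * (real n)\<^sup>2 / \<delta>) \<le> L"
    proof -
      have "4 * (real n)\<^sup>2 \<le> real m * real n * real d"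
      proof -
        have "real d \<ge> 4 * real n" using d2048 n2 by linarith
        then have "real n * real d \<ge> real n * (4 * real n)" by (intro mult_left_mono) auto
        moreover have "real m * (real n * real d) \<ge> 1 * (real n * real d)" using m1 by (intro mult_right_mono) auto
        ultimately show ?thesis by (simp add: power2_eq_square algebra_simps)
      qed
      then have "4 * (real n)\<^sup>2 / \<delta> \<le> real m * real n * real d / \<delta>" using \<delta>0 by (intro divide_right_mono) auto
      moreover have "4 * (real n)\<^sup>2 / \<delta> > 0" using \<delta>0 n1 by simp
      ultimately show ?thesis unfolding L_def by simp
    qed
    have "real d * ln (4 * (real n)\<^sup>2 / \<delta>) \<le> real d * L" using ln4 by (intro mult_left_mono) auto
    also have "\<dots> \<le> (real d / (8 * real n))\<^sup>2"
    proof -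
      have "real d \<ge> 2048 * L * (real n)\<^sup>2"
      proof -
        have "C * L \<ge> 2048 * L" using C1 L1 by (intro mult_right_mono) auto
        then have "K0 * (real n)\<^sup>2 \<ge> (2048 * L) * (real n)\<^sup>2"
          using KCL by (intro mult_right_mono) auto
        then show ?thesis using dC unfolding K0_def by linarith
      qed
      then have "real d * (real d) \<ge> real d * (64 * L * (real n)\<^sup>2)" using L1 by (intro mult_left_mono) auto
      then show ?thesis using n1 by (simp add: power2_eq_square field_simps)
    qed
    finally have "sqrt (real d * ln (4 * (real n)\<^sup>2 / \<delta>)) \<le> sqrt ((real d / (8 * real n))\<^sup>2)"
      by (rule real_sqrt_le_mono)
    also have "\<dots> = real d / (8 * real n)" by (simp only: real_sqrt_abs) simp
    finally have "2 * \<sigma>p\<^sup>2 * sqrt (real d * ln (4 * (real n)\<^sup>2 / \<delta>)) \<le> 2 * \<sigma>p\<^sup>2 * (real d / (8 * real n))"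
      by (intro mult_left_mono) auto
    also have "\<dots> = D / (4 * real n)" unfolding D_def by (simp add: field_simps)
    finally show "\<bar>vinner d (xi i) (xi i')\<bar> \<le> D/(4*real n)" using EPcr i i' ne by fastforce
  qed
  have M0: "M > 0" unfolding Mnm using nm0' by simp
  have K01: "1 / K0 \<le> 1" using K0C C1 by simp
  have aq1: "(a/2) powr (q-2) \<le> 1" using aup K01 a0 q2 by (intro powr_le1) auto
  have aqq1: "a powr (q-2) \<le> 1" using aup K01 a0 q2 by (intro powr_le1) auto
  have Cq: "C \<ge> 1024 * q"
  proof -
    have "2 powr (q+1) * 2 powr (q+3) * 3 powr (q-1) \<ge> 1 * 1 * 1" using e1 e2 e3 by (intro mult_mono) auto
    then have "2 powr (q+1) * 2 powr (q+3) * 3 powr (q-1) * (q * 1024) \<ge> 1 * (q * 1024)"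
      using q2 by (intro mult_right_mono) auto
    then show ?thesis unfolding C_def by (simp add: mult.assoc mult.commute)
  qed
  define B where "B = \<eta>*q*M*(a/2) powr (q-2) / (16 * real m)"
  have B0: "B > 0" unfolding B_def using \<eta>0 q2 M0 a0 m1 by simp
  have Bh: "B \<le> 1/2"
  proof -
    have "\<eta>*q*M*(a/2) powr (q-2) \<le> \<eta>*q*M*1" using aq1 \<eta>0 q2 M0 by (intro mult_left_mono) auto
    also have "\<dots> = q * (\<eta> * M)" by simp
    also have "\<dots> \<le> q * (1 / K0)" using etaM q2 by (intro mult_left_mono) auto
    also have "\<dots> \<le> q * (1 / C)" using K0C C0 q2 by (intro mult_left_mono divide_left_mono) auto
    also have "\<dots> \<le> 1" using Cq C0 by (simp add: field_simps)
    finally have "\<eta>*q*M*(a/2) powr (q-2) \<le> 1" .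
    moreover have "16 * real m \<ge> 16" using m1 by simp
    ultimately have "\<eta>*q*M*(a/2) powr (q-2) \<le> 1/2 * (16 * real m)" by linarith
    then show ?thesis unfolding B_def using m1 by (subst divide_le_eq) auto
  qed
  define X where "X = 2 * ln (real d) / B"
  have X0: "X \<ge> 0" unfolding X_def using B0 d1 by simp
  define N where "N = nat \<lceil>X\<rceil>"
  have NX: "real N \<ge> X" unfolding N_def by (rule real_nat_ceiling_ge)
  have NX1: "real N \<le> X + 1" unfolding N_def using X0 of_int_ceiling_le_add_one[of X]
    by (simp add: of_nat_int_ceiling)
  have powN: "(1 + B)^N \<ge> real d"
  proof -
    have "ln (1 + B) \<ge> B - B\<^sup>2" using B0 Bh by (intro ln_one_plus_pos_lower_bound) auto
    moreover have "B\<^sup>2 \<le> B / 2" using B0 Bh by (simp add: power2_eq_square mult_left_mono[of B "1/2" B, simplified])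
    ultimately have lB: "ln (1 + B) \<ge> B / 2" by linarith
    have "ln ((1 + B)^N) = real N * ln (1 + B)" by (rule ln_realpow)
    also have "\<dots> \<ge> X * (B / 2)" using NX lB X0 B0 by (intro mult_mono) auto
    also have "X * (B / 2) = ln (real d)" unfolding X_def using B0 by simp
    finally have "ln (real d) \<le> ln ((1 + B)^N)" .
    then show ?thesis using d1 B0 by (subst (asm) ln_le_cancel_iff) auto
  qed
  define E where "E = \<eta> * M * a powr (q-2)"
  have E0: "E > 0" unfolding E_def using \<eta>0 M0 a0 by simp
  have Eeq: "\<eta> * \<sigma>0 powr (q - 2) * vnorm d mu powr q = E"
  proof -
    have "nm powr q = nm powr ((q-2) + 2)" by simp
    also have "\<dots> = nm powr (q-2) * nm powr 2" by (rule powr_add)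
    finally have "nm powr q = nm powr (q-2) * M" using nm0' Mnm by simp
    then show ?thesis unfolding E_def a_def nm_def[symmetric] by (simp add: powr_mult)
  qed
  have E1: "E \<le> 1"
  proof -
    have "E \<le> (1/K0) * 1" unfolding E_def using etaM aqq1 a0 K00 by (intro mult_mono) auto
    then show ?thesis using K01 by simp
  qed
  define Kq where "Kq = 2 powr (q+3)"
  have Kq2: "Kq = 2 * 2 powr (q+2)"
  proof -
    have "Kq = 2 powr ((q+2) + 1)" unfolding Kq_def by (simp add: add.assoc)
    also have "\<dots> = 2 powr (q+2) * 2 powr 1" by (rule powr_add)
    finally show ?thesis by simp
  qed
  have Kq16: "2 powr (q+2) = 16 * 2 powr (q-2)"
  proof -
    have h4: "(2::real) powr 4 = 16" by simp
    have hq: "(q-2) + 4 = q + 2" by simp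
    have "(2::real) powr ((q-2) + 4) = 2 powr (q-2) * 2 powr 4" by (rule powr_add)
    then show ?thesis unfolding hq h4 by simp
  qed
  have CKq: "C \<ge> Kq * (2 * q * 3 powr (q-1))"
  proof -
    have "C = 2 powr (q+1) * (Kq * (2 * q * 3 powr (q-1))) * 512" unfolding C_def Kq_def by simp
    moreover have "2 powr (q+1) * (Kq * (2 * q * 3 powr (q-1))) \<ge> 1 * (Kq * (2 * q * 3 powr (q-1)))"
      using e1 q2 unfolding Kq_def by (intro mult_right_mono) auto
    moreover have "Kq * (2 * q * 3 powr (q-1)) \<ge> 0" unfolding Kq_def using q2 by simp
    ultimately show ?thesis by linarith
  qed
  have CKq': "C \<ge> Kq"
  proof -
    have "Kq * (2 * q * 3 powr (q-1)) \<ge> Kq * 1"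
    proof (intro mult_left_mono)
      show "1 \<le> 2 * q * 3 powr (q-1)" using e3 q2 by (smt (verit) mult_less_cancel_right2)
    qed (auto simp: Kq_def)
    then show ?thesis using CKq by linarith
  qed
  have Xb: "X \<le> 2 powr (q+2) * real m * L / E"
  proof -
    have a2: "(a/2) powr (q-2) = a powr (q-2) / 2 powr (q-2)" by (rule powr_divide)
    have "X = 32 * 2 powr (q-2) * real m * ln (real d) / (q * E)"
      unfolding X_def B_def E_def a2 using q2 m1 \<eta>0 M0 a0 by (simp add: field_simps)
    also have "\<dots> \<le> 32 * 2 powr (q-2) * real m * L / (2 * E)"
    proof (intro frac_le)
      show "32 * 2 powr (q-2) * real m * ln (real d) \<le> 32 * 2 powr (q-2) * real m * L"
        using Lln by (intro mult_left_mono) auto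
      show "2 * E \<le> q * E" using q2 E0 by (intro mult_right_mono) auto
    qed (use E0 L1 in auto)
    also have "\<dots> = 2 powr (q+2) * real m * L / E" unfolding Kq16 by simp
    finally show ?thesis .
  qed
  have mLE: "1 \<le> real m * L / E"
  proof -
    have "real m * L \<ge> 1 * 1" using m1 L1 by (intro mult_mono) auto
    then show ?thesis using E0 E1 by (simp add: le_divide_eq)
  qed
  have NKq: "real N \<le> Kq * real m * L / E"
  proof -
    have "2 powr (q+2) \<ge> (1::real)" by (intro ge_one_powr_ge_zero) (use q2 in auto)
    then have "2 powr (q+2) * real m * L / E + 1 \<le> 2 powr (q+2) * real m * L / E + 2 powr (q+2) * (real m * L / E)"
      using mLE by (smt (verit) mult_le_cancel_right1 mult_nonneg_nonneg)
    then show ?thesis using NX1 Xb unfolding Kq2 by (simp add: algebra_simps)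
  qed
  have NT: "real N \<le> C * L powr \<kappa> * real m / (\<eta> * \<sigma>0 powr (q - 2) * vnorm d mu powr q)"
  proof -
    have "Kq * L \<le> K0" using CKq' L1 KCL by (smt (verit) mult_right_mono)
    then have "Kq * real m * L / E \<le> K0 * real m / E" using E0 m1
      by (intro divide_right_mono) (auto simp: mult.commute mult.left_commute mult_left_mono)
    then show ?thesis using NKq unfolding Eeq K0_def by linarith
  qed
  have LK0: "L / K0 \<le> 1 / C"
    using KCL C0 L1 K00 by (simp add: divide_simps mult.commute)
  have C3: "3 / C \<le> 1/2" using C1 by simp
  have Fb1: "P' * a + \<tau> \<le> 1/2"
  proof -
    have "P' * a \<le> (2 * L) * (1 / K0)" using P'L aup P'0 a0 L1 by (intro mult_mono) auto
    then have "P' * a \<le> 2 * (L / K0)" by simp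
    then show ?thesis using LK0 C3 unfolding \<tau>_def by linarith
  qed
  have Fb2: "(P + 1) * s \<le> 1/2"
  proof -
    have "(P + 1) * s \<le> (3 * L) * (1 / K0)" using PL L1 sup P0 s0 by (intro mult_mono) auto
    then have "(P + 1) * s \<le> 3 * (L / K0)" by simp
    then show ?thesis using LK0 C3 by linarith
  qed
  have A3: "(a/2) * (1 + B)^N \<ge> P' * a + \<tau>"
  proof -
    have "(a/2) * (1 + B)^N \<ge> (a/2) * real d" using powN a0 by (intro mult_left_mono) auto
    moreover have "a * real d \<ge> 1"
    proof -
      have h1: "a * real d \<ge> (1 / sqrt (real d)) * real d" using alo d1 by (intro mult_right_mono) auto
      have h2: "(1 / sqrt (real d)) * real d = sqrt (real d)" using sd0
        by (metis div_by_1 divide_divide_eq_right mult.commute real_div_sqrt of_nat_0_le_iff)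
      have h3: "sqrt (real d) \<ge> 1" using d1 by simp
      show ?thesis using h1 h2 h3 by linarith
    qed
    ultimately show ?thesis using Fb1 by linarith
  qed
  define \<delta>0 where "\<delta>0 = \<eta> / (real n * real m) * q * ((P+1)*s) powr (q-1) * (2*D)"
  have \<delta>00: "\<delta>0 \<ge> 0" unfolding \<delta>0_def using \<eta>0 q2 D_def by simp
  have A2: "real N * \<delta>0 \<le> s"
  proof -
    have "real N * \<delta>0 \<le> (Kq * real m * L / E) * \<delta>0" using NKq \<delta>00 by (intro mult_right_mono)
    also have "\<dots> \<le> (Kq * real m * L / E) * (\<eta> / (real n * real m) * q * (3 powr (q-1) * L powr (q-1) * s powr (q-1)) * (2*D))"
    proof (intro mult_left_mono)
      have "((P+1)*s) powr (q-1) \<le> (3 * L * s) powr (q-1)"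
        using PL P0 s0 q2 L1 by (intro powr_mono2 mult_right_mono) auto
      also have "\<dots> = 3 powr (q-1) * L powr (q-1) * s powr (q-1)" by (simp add: powr_mult)
      finally show "\<delta>0 \<le> \<eta> / (real n * real m) * q * (3 powr (q-1) * L powr (q-1) * s powr (q-1)) * (2*D)"
        unfolding \<delta>0_def using \<eta>0 q2 D_def m1 n1 by (intro mult_right_mono mult_left_mono) auto
    qed (use E0 L1 Kq_def in auto)
    also have "\<dots> = (2 * Kq * q * 3 powr (q-1)) * (L * L powr (q-1)) * (\<eta> * s powr (q-1) * D / E) / real n"
      using m1 n1 E0 by (simp add: field_simps)
    also have "\<eta> * s powr (q-1) * D / E = s / SNR powr q"
    proof -
      have "\<eta> * s powr (q-1) * D / E = s powr (q-1) * D / (M * a powr (q-2))"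
        unfolding E_def using \<eta>0 by simp
      also have "\<dots> = s / SNR powr q" unfolding s_def a_def Dz Mnm SNRz
        by (rule ident) (use \<sigma>00 z0 nm0' in auto)
      finally show ?thesis .
    qed
    also have "L * L powr (q-1) = L powr q"
    proof -
      have "L powr q = L powr ((q-1) + 1)" by simp
      also have "\<dots> = L powr (q-1) * L powr 1" by (rule powr_add)
      finally show ?thesis using L1 by simp
    qed
    also have "(2 * Kq * q * 3 powr (q-1)) * L powr q * (s / SNR powr q) / real n
        = (2 * Kq * q * 3 powr (q-1)) * s * (L powr q / (real n * SNR powr q))"
      by (simp add: field_simps)
    also have "\<dots> \<le> (2 * Kq * q * 3 powr (q-1)) * s * (L powr \<kappa> / K0)"
    proof (intro mult_left_mono frac_le)
      show "K0 \<le> real n * SNR powr q" using Hsnr unfolding K0_def .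
    qed (use LkLq K00 s0 q2 Kq_def in auto)
    also have "L powr \<kappa> / K0 = 1 / C" unfolding K0_def using C0 Lk1 L1 by simp
    also have "(2 * Kq * q * 3 powr (q-1)) * s * (1 / C) \<le> s"
    proof -
      have "(2 * Kq * q * 3 powr (q-1)) / C \<le> 1" using CKq C0 by (simp add: field_simps)
      then have "s * ((2 * Kq * q * 3 powr (q-1)) / C) \<le> s * 1" using s0 by (intro mult_left_mono) auto
      then show ?thesis by (simp add: field_simps)
    qed
    finally show ?thesis .
  qed
  have Mpos': "vinner d mu mu > 0" using M0 unfolding M_def .
  have D0: "D > 0" unfolding D_def using \<sigma>p0 d1 by simp
  have xinorm: "\<forall>i<n. D/2 \<le> vinner d (xi i) (xi i) \<and> vinner d (xi i) (xi i) \<le> 3*D/2"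
    using EPxn unfolding vnorm_sq D_def by (simp add: mult.assoc)
  have W0xi: "\<forall>j\<in>{1,-1}. \<forall>r<m. \<forall>i<n. \<bar>vinner d (W0 j r) (xi i)\<bar> \<le> P * s"
  proof -
    have "P * s = 2 * sqrt (ln (8 * real m * real n / \<delta>)) * \<sigma>0 * \<sigma>p * sqrt (real d)"
      unfolding P_def s_def z_def by (simp add: mult.assoc)
    then show ?thesis using EPxi by simp
  qed
  have W0mu: "\<forall>j\<in>{1,-1}. \<forall>r<m. \<bar>vinner d (W0 j r) mu\<bar> \<le> P' * a"
  proof -
    have "P' * a = sqrt (2 * ln (8 * real m / \<delta>)) * \<sigma>0 * vnorm d mu"
      unfolding P'_def a_def nm_def by (simp add: mult.assoc)
    then show ?thesis using EPmu by simp
  qed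
  have W0good: "\<forall>j\<in>{1,-1}. \<exists>r<m. of_int j * vinner d (W0 j r) mu \<ge> a/2"
    using EPg unfolding a_def nm_def by simp
  have cardj: "\<forall>j\<in>{1,-1}. real (card {i. i<n \<and> y i = j}) \<ge> real n / 4"
    using EPc1 EPc2 by auto
  have A2': "real N * (\<eta> / (real n * real m) * q * ((P+1)*s) powr (q-1) * (2*D)) \<le> s"
    using A2 unfolding \<delta>0_def .
  have A3': "(a/2) * (1 + \<eta>*q*(vinner d mu mu)*(a/2) powr (q-2) / (16 * real m))^N \<ge> P' * a + \<tau>"
    using A3 unfolding B_def M_def .
  have loc: "gdmain q d m n mu y xi \<eta> W0 D P P' s a \<tau> N"
    unfolding gdmain_def gdmain_axioms_def gdsetup_def
    using q2 m1 n1 \<eta>0 ylab orth Mpos' D0 xinorm cross s0 a0 P0 P'0 W0xi W0mu W0good cardj Fb1 Fb2 A2' A3'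
    by (intro conjI) assumption+
  have fin: "\<forall>\<gamma> \<rho>. (\<forall>t. \<forall>j\<in>{1,-1}. \<forall>r<m. \<forall>k<d.
               gd q d m n mu y xi \<eta> W0 t j r k = W0 j r k + of_int j * \<gamma> t j r * mu k / (vnorm d mu)\<^sup>2
                           + (\<Sum>i<n. \<rho> t j r i * xi i k / (vnorm d (xi i))\<^sup>2))
          \<longrightarrow> (\<forall>j\<in>{1,-1}. \<exists>r<m. \<gamma> N j r \<ge> \<tau>)
            \<and> (\<forall>j\<in>{1,-1}. \<forall>r<m. \<forall>i<n. \<forall>t\<le>N. \<bar>\<rho> t j r i\<bar> \<le> 2 * s)"
    by (rule gdmain.final_concl[OF loc])
  have sC: "2 * s \<le> C * \<sigma>0 * \<sigma>p * sqrt (real d)"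
  proof -
    have "2 * s \<le> C * s" using C1 s0 by (intro mult_right_mono) auto
    then show ?thesis unfolding s_def z_def by (simp add: mult.assoc)
  qed
  show ?thesis
  proof (intro exI conjI)
    show "real N \<le> C * L powr \<kappa> * real m / (\<eta> * \<sigma>0 powr (q - 2) * vnorm d mu powr q)" by (rule NT)
    show "\<forall>\<gamma> \<rho>. (\<forall>t. \<forall>j\<in>{1,-1}. \<forall>r<m. \<forall>k<d.
               gd q d m n mu y xi \<eta> W0 t j r k = W0 j r k + of_int j * \<gamma> t j r * mu k / (vnorm d mu)\<^sup>2
                           + (\<Sum>i<n. \<rho> t j r i * xi i k / (vnorm d (xi i))\<^sup>2))
          \<longrightarrow> (\<forall>j\<in>{1,-1}. \<exists>r<m. \<gamma> N j r \<ge> 1 / C)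
            \<and> (\<forall>j\<in>{1,-1}. \<forall>r<m. \<forall>i<n. \<forall>t\<le>N.
                  \<bar>\<rho> t j r i\<bar> \<le> C * \<sigma>0 * \<sigma>p * sqrt (real d))"
    proof (intro allI impI)
      fix \<gamma> :: "nat \<Rightarrow> int \<Rightarrow> nat \<Rightarrow> real" and \<rho> :: "nat \<Rightarrow> int \<Rightarrow> nat \<Rightarrow> nat \<Rightarrow> real"
      assume H: "\<forall>t. \<forall>j\<in>{1,-1}. \<forall>r<m. \<forall>k<d.
               gd q d m n mu y xi \<eta> W0 t j r k = W0 j r k + of_int j * \<gamma> t j r * mu k / (vnorm d mu)\<^sup>2
                           + (\<Sum>i<n. \<rho> t j r i * xi i k / (vnorm d (xi i))\<^sup>2)"
      have R: "(\<forall>j\<in>{1,-1}. \<exists>r<m. \<gamma> N j r \<ge> \<tau>)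
            \<and> (\<forall>j\<in>{1,-1}. \<forall>r<m. \<forall>i<n. \<forall>t\<le>N. \<bar>\<rho> t j r i\<bar> \<le> 2 * s)"
        using fin H by blast
      show "(\<forall>j\<in>{1,-1}. \<exists>r<m. \<gamma> N j r \<ge> 1 / C)
            \<and> (\<forall>j\<in>{1,-1}. \<forall>r<m. \<forall>i<n. \<forall>t\<le>N.
                  \<bar>\<rho> t j r i\<bar> \<le> C * \<sigma>0 * \<sigma>p * sqrt (real d))"
        using R sC unfolding \<tau>_def by (meson order_trans)
    qed
  qed
qed

theorem lemma5p4:
  fixes q :: real
  assumes "q > 2"
  shows "\<exists>C>0. \<exists>\<kappa>\<ge>0. \<forall>(d::nat) (m::nat) (n::nat) (\<delta>::real) (\<sigma>p::real) (\<sigma>0::real) (\<eta>::real)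
            (mu::nat \<Rightarrow> real) (y::nat \<Rightarrow> int) (xi::nat \<Rightarrow> nat \<Rightarrow> real)
            (W0::int \<Rightarrow> nat \<Rightarrow> nat \<Rightarrow> real).
    let L = ln (real m * real n * real d / \<delta>);
        SNR = vnorm d mu / (\<sigma>p * sqrt (real d));
        W = gd q d m n mu y xi \<eta> W0
    in
    (d \<ge> 1 \<and> m \<ge> 1 \<and> n \<ge> 1 \<and> 0 < \<delta> \<and> \<delta> < 1 \<and> \<sigma>p > 0 \<and> \<sigma>0 > 0 \<and> \<eta> > 0
     \<and> vnorm d mu > 0
     \<and> (\<forall>i<n. y i \<in> {1, -1})
     \<and> (\<forall>i<n. vinner d (xi i) mu = 0)
     \<and> E_prelim d m n \<delta> \<sigma>p \<sigma>0 mu y xi W0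
     \<and> real d \<ge> C * L powr \<kappa> * real m powr (max 2 (4 / (q - 2)))
                  * real n powr (max 4 ((2 * q - 2) / (q - 2)))
     \<and> real n \<ge> C * (ln (real d)) powr \<kappa> \<and> real m \<ge> C * (ln (real d)) powr \<kappa>
     \<and> \<eta> \<le> min (1 / (vnorm d mu)\<^sup>2) (1 / (\<sigma>p\<^sup>2 * real d)) / (C * L powr \<kappa>)
     \<and> \<sigma>0 \<ge> C * L powr \<kappa> * real n / sqrt (real d)
                * min (1 / (\<sigma>p * sqrt (real d))) (1 / vnorm d mu)
     \<and> \<sigma>0 \<le> real m powr (- 2 / (q - 2)) * real n powr (- max (1 / (q - 2)) 1)
                * min (1 / (\<sigma>p * sqrt (real d))) (1 / vnorm d mu) / (C * L powr \<kappa>)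
     \<and> real n * SNR powr q \<ge> C * L powr \<kappa>)
    \<longrightarrow>
    (\<exists>T1::nat.
       real T1 \<le> C * L powr \<kappa> * real m / (\<eta> * \<sigma>0 powr (q - 2) * vnorm d mu powr q)
     \<and> (\<forall>\<gamma> \<rho>. (\<forall>t. \<forall>j\<in>{1,-1}. \<forall>r<m. \<forall>k<d.
               W t j r k = W0 j r k + of_int j * \<gamma> t j r * mu k / (vnorm d mu)\<^sup>2
                           + (\<Sum>i<n. \<rho> t j r i * xi i k / (vnorm d (xi i))\<^sup>2))
          \<longrightarrow> (\<forall>j\<in>{1,-1}. \<exists>r<m. \<gamma> T1 j r \<ge> 1 / C)
            \<and> (\<forall>j\<in>{1,-1}. \<forall>r<m. \<forall>i<n. \<forall>t\<le>T1.
                  \<bar>\<rho> t j r i\<bar> \<le> C * \<sigma>0 * \<sigma>p * sqrt (real d))))"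
proof -
  define C where "C = 2 powr (q+1) * 2 powr (q+3) * 3 powr (q-1) * q * 1024"
  define \<kappa> where "\<kappa> = q + 1"
  have C0: "C > 0" unfolding C_def using assms by simp
  have k0: "\<kappa> \<ge> 0" unfolding \<kappa>_def using assms by simp
  show ?thesis
  proof (intro exI[of _ C] conjI C0 exI[of _ \<kappa>] k0 allI, unfold Let_def, intro impI, elim conjE)
    fix d m n :: nat and \<delta> \<sigma>p \<sigma>0 \<eta> :: real and mu :: "nat \<Rightarrow> real" and y :: "nat \<Rightarrow> int"
      and xi :: "nat \<Rightarrow> nat \<Rightarrow> real" and W0 :: "int \<Rightarrow> nat \<Rightarrow> nat \<Rightarrow> real"
    assume h: "1 \<le> d" "1 \<le> m" "1 \<le> n" "0 < \<delta>" "\<delta> < 1" "0 < \<sigma>p" "0 < \<sigma>0" "0 < \<eta>"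
      "0 < vnorm d mu" "\<forall>i<n. y i \<in> {1, - 1}" "\<forall>i<n. vinner d (xi i) mu = 0"
      "E_prelim d m n \<delta> \<sigma>p \<sigma>0 mu y xi W0"
      "C * ln (real m * real n * real d / \<delta>) powr \<kappa> * real m powr max 2 (4 / (q - 2)) *
       real n powr max 4 ((2 * q - 2) / (q - 2)) \<le> real d"
      "C * ln (real d) powr \<kappa> \<le> real n" "C * ln (real d) powr \<kappa> \<le> real m"
      "\<eta> \<le> min (1 / (vnorm d mu)\<^sup>2) (1 / (\<sigma>p\<^sup>2 * real d)) / (C * ln (real m * real n * real d / \<delta>) powr \<kappa>)"
      "C * ln (real m * real n * real d / \<delta>) powr \<kappa> * real n / sqrt (real d) *
       min (1 / (\<sigma>p * sqrt (real d))) (1 / vnorm d mu) \<le> \<sigma>0"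
      "\<sigma>0 \<le> real m powr (- 2 / (q - 2)) * real n powr - max (1 / (q - 2)) 1 *
          min (1 / (\<sigma>p * sqrt (real d))) (1 / vnorm d mu) / (C * ln (real m * real n * real d / \<delta>) powr \<kappa>)"
      "C * ln (real m * real n * real d / \<delta>) powr \<kappa> \<le> real n * (vnorm d mu / (\<sigma>p * sqrt (real d))) powr q"
    show "\<exists>T1::nat.
       real T1 \<le> C * ln (real m * real n * real d / \<delta>) powr \<kappa> * real m / (\<eta> * \<sigma>0 powr (q - 2) * vnorm d mu powr q)
     \<and> (\<forall>\<gamma> \<rho>. (\<forall>t. \<forall>j\<in>{1,-1}. \<forall>r<m. \<forall>k<d.
               gd q d m n mu y xi \<eta> W0 t j r k = W0 j r k + of_int j * \<gamma> t j r * mu k / (vnorm d mu)\<^sup>2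
                           + (\<Sum>i<n. \<rho> t j r i * xi i k / (vnorm d (xi i))\<^sup>2))
          \<longrightarrow> (\<forall>j\<in>{1,-1}. \<exists>r<m. \<gamma> T1 j r \<ge> 1 / C)
            \<and> (\<forall>j\<in>{1,-1}. \<forall>r<m. \<forall>i<n. \<forall>t\<le>T1.
                  \<bar>\<rho> t j r i\<bar> \<le> C * \<sigma>0 * \<sigma>p * sqrt (real d)))"
      by (rule core[OF assms C_def \<kappa>_def refl refl h(1-12) h(13) h(16-19)])
  qed
qed


end
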